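(* $\operatorname{BWT}_2\times\lim\le_{\mathrm{sW}}\operatorname{Proj}^-_\mathbb{R}$.
   Context: Represented spaces: a representation of a set $X$ is a partial surjection $\delta_X:\subseteq\mathbb{N}^\mathbb{N}\to X$. For a partial multi-valued function $f:\subseteq X\rightrightarrows Y$, a realizer is a partial $F:\subseteq\mathbb{N}^\mathbb{N}\to\mathbb{N}^\mathbb{N}$ with $\delta_Y(F(p))\in f(\delta_X(p))$ for all $p$ with $\delta_X(p)\in\mathrm{dom}(f)$. Strong Weihrauch reducibility $f\le_{\mathrm{sW}}g$: there are computable partial $H,K:\subseteq\mathbb{N}^\mathbb{N}\to\mathbb{N}^\mathbb{N}$ with $H\circ G\circ K$ a realizer of $f$ for every realizer $G$ of $g$. For multi-valued $f,g$, the product $f\times g$ maps $(x,y)\in\mathrm{dom}(f)\times\mathrm{dom}(g)$ to $f(x)\times g(y)$. $\operatorname{BWT}_2:\{0,1\}^\mathbb{N}\rightrightarrows\{0,1\}$ maps a binary sequence to the set of values occurring in it infinitely often. $\lim:\subseteq(\mathbb{N}^\mathbb{N})^\mathbb{N}\to\mathbb{N}^\mathbb{N}$ maps a convergent sequence in Baire space to its limit. $\mathbb{R}$ has the Cauchy representation. $\mathcal{A}_-(\mathbb{R})$: closed subsets of $\mathbb{R}$, a name of $A$ being an enumeration of rational open intervals whose union is $\mathbb{R}\setminus A$. $\operatorname{Proj}^-_\mathbb{R}:\subseteq\mathbb{R}\times\mathcal{A}_-(\mathbb{R})\rightrightarrows\mathbb{R}$ maps $(x,A)$ with $A$ nonempty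 closed to the set of $y\in A$ with $|x-y|=d(x,A)$. *)

theory Defs
  imports "HOL-Analysis.Analysis" "HOL-Library.Nat_Bijection"
begin

datatype recf =
    Zr | Sc | Fst | Snd | Ident
  | Comp recf recf      \<comment> \<open>Comp f g = f o g\<close>
  | Pairf recf recf
  | Prec recf recf
  | Mu recf

inductive evalr :: "recf \<Rightarrow> nat \<Rightarrow> nat \<Rightarrow> bool" where
  "evalr Zr x 0"
| "evalr Sc x (Suc x)"
| "evalr Fst x (fst (prod_decode x))"
| "evalr Snd x (snd (prod_decode x))"
| "evalr Ident x x"
| "evalr g x y \<Longrightarrow> evalr f y z \<Longrightarrow> evalr (Comp f g) x z"
| "evalr f x y \<Longrightarrow> evalr g x z \<Longrightarrow> evalr (Pairf f g) x (prod_encode (y, z))"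
| "evalr f x y \<Longrightarrow> evalr (Prec f g) (prod_encode (x, 0)) y"
| "evalr (Prec f g) (prod_encode (x, n)) y \<Longrightarrow> evalr g (prod_encode (x, prod_encode (n, y))) z
     \<Longrightarrow> evalr (Prec f g) (prod_encode (x, Suc n)) z"
| "evalr f (prod_encode (x, n)) 0 \<Longrightarrow> (\<forall>m<n. \<exists>y. evalr f (prod_encode (x, m)) (Suc y))
     \<Longrightarrow> evalr (Mu f) x n"

type_synonym baire = "nat \<Rightarrow> nat"
type_synonym 'a rep = "baire \<Rightarrow> 'a option"

text \<open>A partial F on Baire space is computable iff some partial recursive function, queried
  with output index n and ever longer input prefixes, answers 0 ("need more input") until it
  answers Suc (F(p)(n)). Behaviour outside dom F is irrelevant.\<close>
definition computable :: "(baire \<Rightarrow> baire option) \<Rightarrow> bool" where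
  "computable F \<longleftrightarrow> (\<exists>c. \<forall>p q. F p = Some q \<longrightarrow>
     (\<forall>n. \<exists>k. evalr c (prod_encode (n, list_encode (map p [0..<k]))) (Suc (q n)) \<and>
               (\<forall>k'<k. evalr c (prod_encode (n, list_encode (map p [0..<k']))) 0)))"

text \<open>Multi-valued problems: f :: 'a => 'b set, with dom f = {x. f x \<noteq> {}}.\<close>
definition realizes :: "'a rep \<Rightarrow> 'b rep \<Rightarrow> ('a \<Rightarrow> 'b set) \<Rightarrow> (baire \<Rightarrow> baire option) \<Rightarrow> bool" where
  "realizes dX dY f F \<longleftrightarrow> (\<forall>p x. dX p = Some x \<and> f x \<noteq> {} \<longrightarrow>
      (\<exists>q y. F p = Some q \<and> dY q = Some y \<and> y \<in> f x))"

definition sW_reducible ::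
  "'a rep \<Rightarrow> 'b rep \<Rightarrow> ('a \<Rightarrow> 'b set) \<Rightarrow> 'c rep \<Rightarrow> 'd rep \<Rightarrow> ('c \<Rightarrow> 'd set) \<Rightarrow> bool" where
  "sW_reducible dX dY f dU dV g \<longleftrightarrow> (\<exists>H K. computable H \<and> computable K \<and>
     (\<forall>G. realizes dU dV g G \<longrightarrow>
        realizes dX dY f (\<lambda>p. Option.bind (K p) (\<lambda>r. Option.bind (G r) H))))"

definition rep_prod :: "'a rep \<Rightarrow> 'b rep \<Rightarrow> ('a \<times> 'b) rep" where
  "rep_prod d1 d2 r = (case (d1 (\<lambda>n. r (2*n)), d2 (\<lambda>n. r (2*n+1))) of
      (Some a, Some b) \<Rightarrow> Some (a, b) | _ \<Rightarrow> None)"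

definition prob_prod :: "('a \<Rightarrow> 'b set) \<Rightarrow> ('c \<Rightarrow> 'd set) \<Rightarrow> ('a \<times> 'c \<Rightarrow> ('b \<times> 'd) set)" where
  "prob_prod f g = (\<lambda>(x, y). f x \<times> g y)"

definition rep_baire :: "baire rep" where
  "rep_baire p = Some p"

definition rep_cantor :: "(nat \<Rightarrow> bool) rep" where
  "rep_cantor p = (if \<forall>n. p n \<le> 1 then Some (\<lambda>n. p n = 1) else None)"

definition rep_bool :: "bool rep" where
  "rep_bool p = (if p 0 \<le> 1 then Some (p 0 = 1) else None)"

definition rep_baire_seq :: "(nat \<Rightarrow> baire) rep" where
  "rep_baire_seq p = Some (\<lambda>i j. p (prod_encode (i, j)))"

definition nuQ :: "nat \<Rightarrow> real" where
  "nuQ n = (case prod_decode n of (a, b) \<Rightarrow> real_of_int (int_decode a) / real (Suc b))"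

definition delta_real :: "real rep" where
  "delta_real p = (if \<exists>x. \<forall>i. \<bar>nuQ (p i) - x\<bar> \<le> (1/2) ^ i
                 then Some (THE x. \<forall>i. \<bar>nuQ (p i) - x\<bar> \<le> (1/2) ^ i) else None)"

text \<open>Negative information on closed sets: p enumerates rational open intervals
  (nuQ a, nuQ b), (a,b) = prod_decode (p n) (empty intervals allowed), whose union is the
  complement.\<close>
definition rep_closed_neg :: "real set rep" where
  "rep_closed_neg p = Some (- (\<Union>n. case prod_decode (p n) of (a, b) \<Rightarrow> {nuQ a <..< nuQ b}))"

definition BWT2 :: "(nat \<Rightarrow> bool) \<Rightarrow> bool set" where
  "BWT2 x = {b. infinite {n. x n = b}}"

definition lim_baire :: "(nat \<Rightarrow> baire) \<Rightarrow> baire set" where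
  "lim_baire xs = {L. xs \<longlonglongrightarrow> L}"

definition ProjR :: "real \<times> real set \<Rightarrow> real set" where
  "ProjR = (\<lambda>(x, A). if closed A \<and> A \<noteq> {} then {y \<in> A. \<bar>x - y\<bar> = infdist x A} else {})"

end

theory Submission
  imports Defs
begin

definition rfun :: "(nat \<Rightarrow> nat) \<Rightarrow> bool" where
  "rfun f \<longleftrightarrow> (\<exists>c. \<forall>x. evalr c x (f x))"

definition rpred :: "(nat \<Rightarrow> bool) \<Rightarrow> bool" where
  "rpred P \<longleftrightarrow> rfun (\<lambda>x. if P x then 1 else 0)"

abbreviation pd1 :: "nat \<Rightarrow> nat" where "pd1 w \<equiv> fst (prod_decode w)"
abbreviation pd2 :: "nat \<Rightarrow> nat" where "pd2 w \<equiv> snd (prod_decode w)"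

lemma rfun_zero: "rfun (\<lambda>x. 0)"
  unfolding rfun_def by (rule exI[of _ Zr]) (auto intro: evalr.intros)

lemma rfun_id: "rfun (\<lambda>x. x)"
  unfolding rfun_def by (rule exI[of _ Ident]) (auto intro: evalr.intros)

lemma rfun_Suc: "rfun f \<Longrightarrow> rfun (\<lambda>x. Suc (f x))"
  unfolding rfun_def by (metis evalr.intros(2,6))

lemma rfun_fst: "rfun f \<Longrightarrow> rfun (\<lambda>x. fst (prod_decode (f x)))"
  unfolding rfun_def by (metis evalr.intros(3,6))

lemma rfun_snd: "rfun f \<Longrightarrow> rfun (\<lambda>x. snd (prod_decode (f x)))"
  unfolding rfun_def by (metis evalr.intros(4,6))

lemma rfun_comp: "rfun f \<Longrightarrow> rfun g \<Longrightarrow> rfun (\<lambda>x. f (g x))"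
  unfolding rfun_def by (metis evalr.intros(6))

lemma rfun_pair: "rfun f \<Longrightarrow> rfun g \<Longrightarrow> rfun (\<lambda>x. prod_encode (f x, g x))"
  unfolding rfun_def by (metis evalr.intros(7))

lemma rfun_const: "rfun (\<lambda>x. c)"
  by (induction c) (auto intro: rfun_zero rfun_Suc)

primrec nrec :: "(nat \<Rightarrow> nat) \<Rightarrow> (nat \<Rightarrow> nat \<Rightarrow> nat \<Rightarrow> nat) \<Rightarrow> nat \<Rightarrow> nat \<Rightarrow> nat" where
  "nrec a s x 0 = a x"
| "nrec a s x (Suc n) = s x n (nrec a s x n)"

lemma rfun_nrec:
  assumes a: "rfun a" and s: "rfun (\<lambda>w. s (pd1 w) (pd1 (pd2 w)) (pd2 (pd2 w)))"
    and m: "rfun m"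
  shows "rfun (\<lambda>x. nrec a s x (m x))"
proof -
  obtain ca where ca: "\<And>x. evalr ca x (a x)" using a unfolding rfun_def by blast
  obtain cs where cs: "\<And>w. evalr cs w (s (pd1 w) (pd1 (pd2 w)) (pd2 (pd2 w)))"
    using s unfolding rfun_def by blast
  have "evalr (Prec ca cs) (prod_encode (x, n)) (nrec a s x n)" for x n
  proof (induction n)
    case 0 then show ?case using ca by (auto intro: evalr.intros)
  next
    case (Suc n)
    have "evalr cs (prod_encode (x, prod_encode (n, nrec a s x n))) (nrec a s x (Suc n))"
      using cs[of "prod_encode (x, prod_encode (n, nrec a s x n))"] by simp
    then show ?case using Suc by (auto intro: evalr.intros)
  qed
  then have "rfun (\<lambda>z. nrec a s (pd1 z) (pd2 z))"
    unfolding rfun_def by (metis prod.collapse prod_decode_inverse)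
  from rfun_comp[OF this rfun_pair[OF rfun_id m]] show ?thesis by simp
qed


lemma rfun_add: "rfun f \<Longrightarrow> rfun g \<Longrightarrow> rfun (\<lambda>x. f x + g x)"
proof -
  assume f: "rfun f" and g: "rfun g"
  have "nrec f (\<lambda>x n acc. Suc acc) x n = f x + n" for x n by (induction n) auto
  moreover have "rfun (\<lambda>x. nrec f (\<lambda>x n acc. Suc acc) x (g x))"
    by (rule rfun_nrec[OF f _ g]) (simp add: rfun_Suc rfun_snd rfun_id)
  ultimately show ?thesis by simp
qed

lemma rfun_mult: "rfun f \<Longrightarrow> rfun g \<Longrightarrow> rfun (\<lambda>x. f x * g x)"
proof -
  assume f: "rfun f" and g: "rfun g"
  have "nrec (\<lambda>x. 0) (\<lambda>x n acc. acc + f x) x n = f x * n" for x n by (induction n) auto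
  moreover have "rfun (\<lambda>x. nrec (\<lambda>x. 0) (\<lambda>x n acc. acc + f x) x (g x))"
    by (rule rfun_nrec[OF rfun_const _ g]) 
       (simp add: rfun_add rfun_comp[OF f] rfun_snd rfun_fst rfun_id)
  ultimately show ?thesis by (simp add: mult.commute)
qed

lemma rfun_pred: "rfun f \<Longrightarrow> rfun (\<lambda>x. f x - 1)"
proof -
  assume f: "rfun f"
  have "nrec (\<lambda>x. 0) (\<lambda>x n acc. n) x n = n - 1" for x n by (induction n) auto
  moreover have "rfun (\<lambda>x. nrec (\<lambda>x. 0) (\<lambda>x n acc. n) x (f x))"
    by (rule rfun_nrec[OF rfun_const _ f]) (simp add: rfun_snd rfun_fst rfun_id)
  ultimately show ?thesis by simp
qed

lemma rfun_minus: "rfun f \<Longrightarrow> rfun g \<Longrightarrow> rfun (\<lambda>x. f x - g x)"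
proof -
  assume f: "rfun f" and g: "rfun g"
  have "nrec f (\<lambda>x n acc. acc - 1) x n = f x - n" for x n by (induction n) auto
  moreover have "rfun (\<lambda>x. nrec f (\<lambda>x n acc. acc - 1) x (g x))"
    by (rule rfun_nrec[OF f _ g]) (rule rfun_pred, intro rfun_snd rfun_id)
  ultimately show ?thesis by simp
qed

lemma rfun_power: "rfun f \<Longrightarrow> rfun g \<Longrightarrow> rfun (\<lambda>x. f x ^ g x)"
proof -
  assume f: "rfun f" and g: "rfun g"
  have "nrec (\<lambda>x. 1) (\<lambda>x n acc. acc * f x) x n = f x ^ n" for x n by (induction n) auto
  moreover have "rfun (\<lambda>x. nrec (\<lambda>x. 1) (\<lambda>x n acc. acc * f x) x (g x))"
    by (rule rfun_nrec[OF rfun_const _ g]) 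
       (simp add: rfun_mult rfun_comp[OF f] rfun_snd rfun_fst rfun_id)
  ultimately show ?thesis by simp
qed

lemma rfun_comp2:
  assumes "rfun (\<lambda>w. g (pd1 w) (pd2 w))" "rfun a" "rfun b"
  shows "rfun (\<lambda>x. g (a x) (b x))"
  using rfun_comp[OF assms(1) rfun_pair[OF assms(2,3)]] by simp

lemma rfun_sum:
  assumes g: "rfun (\<lambda>w. g (pd1 w) (pd2 w))" and m: "rfun m"
  shows "rfun (\<lambda>x. \<Sum>j<m x. g x j)"
proof -
  have "nrec (\<lambda>x. 0) (\<lambda>x n acc. acc + g x n) x n = (\<Sum>j<n. g x j)" for x n
    by (induction n) auto
  moreover have "rfun (\<lambda>x. nrec (\<lambda>x. 0) (\<lambda>x n acc. acc + g x n) x (m x))"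
    by (rule rfun_nrec[OF rfun_const _ m])
      (simp add: rfun_add rfun_comp2[OF g] rfun_snd rfun_fst rfun_id)
  ultimately show ?thesis by simp
qed

lemma rfun_funpow:
  assumes s: "rfun s" and f: "rfun f" and g: "rfun g"
  shows "rfun (\<lambda>x. (s ^^ g x) (f x))"
proof -
  have "nrec f (\<lambda>x n acc. s acc) x n = (s ^^ n) (f x)" for x n
    by (induction n) auto
  moreover have "rfun (\<lambda>x. nrec f (\<lambda>x n acc. s acc) x (g x))"
    by (rule rfun_nrec[OF f _ g]) (simp add: rfun_comp[OF s] rfun_snd rfun_id)
  ultimately show ?thesis by simp
qed

lemma rpred_if:
  assumes "rpred P" "rfun f" "rfun g"
  shows "rfun (\<lambda>x. if P x then f x else g x)"
proof -
  have "(if P x then f x else g x) = f x * (if P x then 1 else 0) + g x * (1 - (if P x then 1 else 0))" for x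
    by auto
  moreover have "rfun (\<lambda>x. f x * (if P x then 1 else 0) + g x * (1 - (if P x then 1 else 0)))"
    using assms unfolding rpred_def by (intro rfun_add rfun_mult rfun_minus rfun_const)
  ultimately show ?thesis by simp
qed

lemma rpred_le: "rfun f \<Longrightarrow> rfun g \<Longrightarrow> rpred (\<lambda>x. f x \<le> g x)"
proof -
  assume "rfun f" "rfun g"
  then have "rfun (\<lambda>x. 1 - (f x - g x))" by (intro rfun_minus rfun_const)
  moreover have "(1 - (f x - g x)) = (if f x \<le> g x then 1 else 0)" for x by auto
  ultimately show ?thesis unfolding rpred_def by simp
qed

lemma rpred_less: "rfun f \<Longrightarrow> rfun g \<Longrightarrow> rpred (\<lambda>x. f x < g x)"
  using rpred_le[OF rfun_Suc] by (simp add: Suc_le_eq)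

lemma rpred_eq: "rfun f \<Longrightarrow> rfun g \<Longrightarrow> rpred (\<lambda>x. f x = g x)"
proof -
  assume "rfun f" "rfun g"
  then have "rfun (\<lambda>x. 1 - ((f x - g x) + (g x - f x)))" by (intro rfun_minus rfun_add rfun_const)
  moreover have "(1 - ((f x - g x) + (g x - f x))) = (if f x = g x then 1 else 0)" for x by auto
  ultimately show ?thesis unfolding rpred_def by simp
qed

lemma rpred_not: "rpred P \<Longrightarrow> rpred (\<lambda>x. \<not> P x)"
proof -
  assume "rpred P"
  then have "rfun (\<lambda>x. 1 - (if P x then 1 else 0))" unfolding rpred_def by (intro rfun_minus rfun_const)
  moreover have "(1 - (if P x then 1 else 0)) = (if \<not> P x then 1 else (0::nat))" for x by auto
  ultimately show ?thesis unfolding rpred_def by simp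
qed

lemma rpred_conj: "rpred P \<Longrightarrow> rpred Q \<Longrightarrow> rpred (\<lambda>x. P x \<and> Q x)"
proof -
  assume "rpred P" "rpred Q"
  then have "rfun (\<lambda>x. (if P x then 1 else 0) * (if Q x then 1 else 0))"
    unfolding rpred_def by (rule rfun_mult)
  moreover have "(if P x then 1 else 0) * (if Q x then 1 else 0) = (if P x \<and> Q x then 1 else (0::nat))" for x
    by auto
  ultimately show ?thesis unfolding rpred_def by simp
qed

lemma rpred_disj: "rpred P \<Longrightarrow> rpred Q \<Longrightarrow> rpred (\<lambda>x. P x \<or> Q x)"
proof -
  assume "rpred P" "rpred Q"
  then have "rpred (\<lambda>x. \<not> (\<not> P x \<and> \<not> Q x))" by (intro rpred_not rpred_conj)
  then show ?thesis by simp
qed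

lemma rpred_ex:
  assumes "rpred (\<lambda>w. P (pd1 w) (pd2 w))" "rfun m"
  shows "rpred (\<lambda>x. \<exists>j<m x. P x j)"
proof -
  have "rfun (\<lambda>x. \<Sum>j<m x. if P x j then 1 else 0)"
    using assms unfolding rpred_def by (intro rfun_sum) auto
  then have "rpred (\<lambda>x. 0 < (\<Sum>j<m x. if P x j then 1 else (0::nat)))"
    by (intro rpred_less rfun_const)
  moreover have "(0 < (\<Sum>j<m x. if P x j then 1 else (0::nat))) = (\<exists>j<m x. P x j)" for x
    proof -
    have "(\<Sum>j<m x. if P x j then 1 else (0::nat)) = 0 \<longleftrightarrow> (\<forall>j\<in>{..<m x}. (if P x j then 1 else (0::nat)) = 0)"
      by (rule sum_eq_0_iff) simp
    then show ?thesis by (simp only: neq0_conv[symmetric]) auto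
  qed
  ultimately show ?thesis by simp
qed

lemma rpred_all:
  assumes "rpred (\<lambda>w. P (pd1 w) (pd2 w))" "rfun m"
  shows "rpred (\<lambda>x. \<forall>j<m x. P x j)"
proof -
  have "rpred (\<lambda>x. \<not> (\<exists>j<m x. \<not> P x j))"
    by (rule rpred_not, rule rpred_ex[OF rpred_not[OF assms(1)] assms(2)])
  then show ?thesis by simp
qed

lemma sum_ind_less: "(\<Sum>j<n. if j < d then 1 else (0::nat)) = min n d"
  by (induction n) (auto simp: min_def)
lemma divsum: "(F::nat) div G = (if G = 0 then 0 else \<Sum>j<F. if Suc j * G \<le> F then 1 else 0)"
proof (cases "G = 0")
  case False
  have h: "Suc j * G \<le> F \<longleftrightarrow> j < F div G" for j
    using False less_eq_div_iff_mult_less_eq[of G "Suc j" F] by (simp only: Suc_le_eq)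
  have "(\<Sum>j<F. if Suc j * G \<le> F then 1 else (0::nat)) = (\<Sum>j<F. if j < F div G then 1 else 0)"
    by (simp only: h)
  also have "\<dots> = min F (F div G)" by (rule sum_ind_less)
  also have "\<dots> = F div G" by (simp add: div_le_dividend min_absorb2)
  finally show ?thesis using False by simp
qed simp

lemma rfun_div: "rfun f \<Longrightarrow> rfun g \<Longrightarrow> rfun (\<lambda>x. f x div g x)"
proof -
  assume f: "rfun f" and g: "rfun g"
  have "f x div g x = (if g x = 0 then 0 else \<Sum>j<f x. if Suc j * g x \<le> f x then 1 else 0)" for x
    by (rule divsum)
  moreover have "rfun (\<lambda>x. if g x = 0 then 0 else \<Sum>j<f x. if Suc j * g x \<le> f x then 1 else 0)"
  proof (rule rpred_if[OF rpred_eq[OF g rfun_const] rfun_const rfun_sum[OF _ f]])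
    have "rpred (\<lambda>w. Suc (pd2 w) * g (pd1 w) \<le> f (pd1 w))"
      by (intro rpred_le rfun_mult rfun_Suc rfun_snd rfun_id rfun_comp[OF f] rfun_comp[OF g] rfun_fst)
    then show "rfun (\<lambda>w. if Suc (pd2 w) * g (pd1 w) \<le> f (pd1 w) then 1 else 0)"
      unfolding rpred_def .
  qed
  ultimately show ?thesis by simp
qed

lemma rfun_mod: "rfun f \<Longrightarrow> rfun g \<Longrightarrow> rfun (\<lambda>x. f x mod g x)"
proof -
  assume f: "rfun f" and g: "rfun g"
  have "rfun (\<lambda>x. f x - g x * (f x div g x))" by (intro rfun_minus rfun_mult rfun_div f g)
  then show ?thesis by (simp add: minus_div_mult_eq_mod[symmetric] mult.commute)
qed

definition ltl :: "nat \<Rightarrow> nat" where "ltl c = pd2 (c - 1)"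
definition lhd :: "nat \<Rightarrow> nat" where "lhd c = pd1 (c - 1)"
definition lnth :: "nat \<Rightarrow> nat \<Rightarrow> nat" where "lnth c j = lhd ((ltl ^^ j) c)"
definition llen :: "nat \<Rightarrow> nat" where
  "llen c = (\<Sum>j<c. if (ltl ^^ j) c = 0 then 0 else 1)"

lemma prod_decode_0: "prod_decode 0 = (0, 0)"
proof -
  have "prod_encode (0,0) = 0" by (simp add: prod_encode_def)
  then show ?thesis by (metis prod_encode_inverse)
qed

lemma ltl_encode: "ltl (list_encode xs) = list_encode (tl xs)"
  by (cases xs) (auto simp: ltl_def prod_decode_0)

lemma enc0: "list_encode ys = 0 \<longleftrightarrow> ys = []"
  by (cases ys) auto

lemma ltl_pow: "(ltl ^^ j) (list_encode xs) = list_encode (drop j xs)"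
proof (induction j arbitrary: xs)
  case (Suc j)
  then show ?case by (simp only: funpow_Suc_right o_apply ltl_encode) (simp add: drop_Suc)
qed simp

lemma lnth_encode: "j < length xs \<Longrightarrow> lnth (list_encode xs) j = xs ! j"
  unfolding lnth_def ltl_pow lhd_def
  by (subst Cons_nth_drop_Suc[symmetric]) (auto simp del: Cons_nth_drop_Suc)

lemma length_le_encode: "length xs \<le> list_encode xs"
proof (induction xs)
  case (Cons a xs)
  then show ?case using le_prod_encode_2[of "list_encode xs" a] by simp
qed simp

lemma llen_encode: "llen (list_encode xs) = length xs"
proof -
  have "llen (list_encode xs) = (\<Sum>j<list_encode xs. if j < length xs then 1 else 0)"
    unfolding llen_def ltl_pow
    by (rule sum.cong[OF refl]) (simp add: enc0)
  also have "\<dots> = length xs" using sum_ind_less length_le_encode by (simp add: min_absorb2)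
  finally show ?thesis .
qed

lemma rfun_ltl: "rfun ltl"
  unfolding ltl_def by (intro rfun_snd rfun_pred rfun_id)

lemma rfun_lnth: "rfun f \<Longrightarrow> rfun g \<Longrightarrow> rfun (\<lambda>x. lnth (f x) (g x))"
  unfolding lnth_def lhd_def by (intro rfun_fst rfun_pred rfun_funpow rfun_ltl)

lemma rfun_llen: "rfun f \<Longrightarrow> rfun (\<lambda>x. llen (f x))"
proof -
  assume f: "rfun f"
  have "rfun (\<lambda>w. if (ltl ^^ pd2 w) (f (pd1 w)) = 0 then 0 else 1)"
    by (intro rpred_if rpred_eq rfun_funpow rfun_ltl rfun_comp[OF f] rfun_fst rfun_snd rfun_id rfun_const)
  then show ?thesis unfolding llen_def by (intro rfun_sum[OF _ f])
qed

lemma rpred_const: "rpred (\<lambda>x. c)"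
  unfolding rpred_def by (cases c) (auto intro: rfun_const)

lemmas rfun_intros = rfun_id rfun_Suc rfun_fst rfun_snd rfun_pair rfun_add rfun_mult
  rfun_minus rfun_power rfun_div rfun_mod rfun_sum rpred_if rfun_lnth rfun_llen
  rpred_le rpred_less rpred_eq rpred_not rpred_conj rpred_disj rpred_ex rpred_all
  rfun_const rpred_const

lemma "rfun (\<lambda>w. \<Sum>j<pd1 w. if lnth (pd2 w) (2*j) = 1 \<and> (\<exists>l<j. l mod 3 = 1) then 1 else 0)"
  by (intro rfun_intros)


definition P :: "(nat \<Rightarrow> nat) \<Rightarrow> nat \<Rightarrow> nat" where
  "P t n = (\<Sum>k<n. Suc (t k))"

definition dig :: "(nat \<Rightarrow> nat) \<Rightarrow> nat \<Rightarrow> nat" where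
  "dig t j = (if \<exists>n. j = P t n + t n then 1 else 2)"

primrec Nd :: "(nat \<Rightarrow> nat) \<Rightarrow> nat \<Rightarrow> nat" where
  "Nd t 0 = 0"
| "Nd t (Suc J) = 4 * Nd t J + dig t J"

definition E :: "(nat \<Rightarrow> nat) \<Rightarrow> real" where
  "E t = (\<Sum>j. real (dig t j) / 4 ^ Suc j)"

definition T :: "(nat \<Rightarrow> nat) \<Rightarrow> nat \<Rightarrow> real" where
  "T t J = (\<Sum>j. real (dig t (j + J)) / 4 ^ Suc j)"

lemma P_Suc: "P t (Suc n) = P t n + t n + 1"
  by (simp add: P_def)

lemma P_mono: "n \<le> n' \<Longrightarrow> P t n \<le> P t n'"
  unfolding P_def by (rule sum_mono2) auto

lemma P_ge: "n \<le> P t n"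
  unfolding P_def using sum_mono[of "{..<n}" "\<lambda>_. 1::nat" "\<lambda>k. Suc (t k)"] by simp

lemma dig_12: "dig t j = 1 \<or> dig t j = 2"
  by (simp add: dig_def)

lemma dig_le2: "real (dig t j) \<le> 2" and dig_ge1: "1 \<le> real (dig t j)"
  using dig_12[of t j] by auto

lemma summable_dig: "summable (\<lambda>j. real (dig t (j + J)) / 4 ^ Suc j)"
proof (rule summable_comparison_test)
  show "\<exists>N. \<forall>n\<ge>N. norm (real (dig t (n + J)) / 4 ^ Suc n) \<le> 2 * (1/4) ^ Suc n"
  proof (intro exI[of _ 0] allI impI)
    fix n :: nat
    have "real (dig t (n + J)) / 4 ^ Suc n \<le> 2 / 4 ^ Suc n"
      using dig_le2 by (intro divide_right_mono) auto
    then show "norm (real (dig t (n + J)) / 4 ^ Suc n) \<le> 2 * (1/4) ^ Suc n"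
      by (simp add: power_divide)
  qed
  show "summable (\<lambda>n. 2 * (1/4::real) ^ Suc n)"
    by (intro summable_mult summable_Suc_iff[THEN iffD2] summable_geometric) simp
qed

lemma geo4: "(\<Sum>j. (1/4::real) ^ Suc j) = 1/3"
proof -
  have "(\<Sum>j. (1/4::real) ^ Suc j) = (1/4) * (\<Sum>j. (1/4) ^ j)"
    by (subst suminf_mult[symmetric]) (auto intro: summable_geometric)
  also have "\<dots> = 1/3" by (subst suminf_geometric) auto
  finally show ?thesis .
qed

lemma T_bounds: "1/3 \<le> T t J" "T t J \<le> 2/3"
proof -
  have s1: "summable (\<lambda>j. (1/4::real) ^ Suc j)"
    by (intro summable_Suc_iff[THEN iffD2] summable_geometric) simp
  have le1: "(1/4::real) ^ Suc j \<le> real (dig t (j + J)) / 4 ^ Suc j" for j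
  proof -
    have "1 / 4 ^ Suc j \<le> real (dig t (j + J)) / 4 ^ Suc j"
      using dig_ge1 by (intro divide_right_mono) auto
    then show ?thesis by (simp only: power_divide power_one)
  qed
  have le2: "real (dig t (j + J)) / 4 ^ Suc j \<le> 2 * (1/4::real) ^ Suc j" for j
  proof -
    have "real (dig t (j + J)) / 4 ^ Suc j \<le> 2 / 4 ^ Suc j"
      using dig_le2 by (intro divide_right_mono) auto
    then show ?thesis by (simp add: power_divide)
  qed
  show "1/3 \<le> T t J" unfolding T_def
    using suminf_le[OF le1 s1 summable_dig] geo4 by simp
  have "T t J \<le> (\<Sum>j. 2 * (1/4::real) ^ Suc j)" unfolding T_def
    by (rule suminf_le[OF le2 summable_dig]) (intro summable_mult s1)
  also have "\<dots> = 2/3" using geo4 by (subst suminf_mult) (auto intro: s1)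
  finally show "T t J \<le> 2/3" .
qed

lemma T_step: "T t J = (real (dig t J) + T t (Suc J)) / 4"
proof -
  let ?f = "\<lambda>j. real (dig t (j + J)) / 4 ^ Suc j"
  have "(\<Sum>n. ?f (Suc n)) = suminf ?f - ?f 0" by (rule suminf_split_head[OF summable_dig])
  moreover have "(\<lambda>n. ?f (Suc n)) = (\<lambda>n. (real (dig t (n + Suc J)) / 4 ^ Suc n) / 4)"
    by (auto simp: field_simps)
  moreover have "(\<Sum>n. (real (dig t (n + Suc J)) / 4 ^ Suc n) / 4) = T t (Suc J) / 4"
    using suminf_divide[OF summable_dig[of t "Suc J"], of 4] unfolding T_def by simp
  ultimately have "T t (Suc J) / 4 = T t J - real (dig t J) / 4"
    unfolding T_def by simp
  then show ?thesis by simp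
qed

lemma T0: "T t 0 = E t" unfolding T_def E_def by simp

lemma E_split: "E t = (real (Nd t J) + T t J) / 4 ^ J"
proof (induction J)
  case 0 show ?case by (simp only: T0 Nd.simps power_0 div_by_1 of_nat_0 add_0)
next
  case (Suc J)
  have "E t = (real (Nd t J) + (real (dig t J) + T t (Suc J)) / 4) / 4 ^ J"
    using Suc T_step[of t J] by simp
  also have "\<dots> = (real (Nd t (Suc J)) + T t (Suc J)) / 4 ^ Suc J"
    by (simp add: field_simps)
  finally show ?case .
qed

lemma E_bounds: "1/3 \<le> E t" "E t \<le> 2/3"
  using E_split[of t 0] T_bounds[of t 0] by auto

lemma digP: "j < P t m + t m \<Longrightarrow> (dig t j = 1 \<longleftrightarrow> (\<exists>n<m. j = P t n + t n))"
proof -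
  assume j: "j < P t m + t m"
  have "P t m + t m \<le> P t n + t n" if "m \<le> n" for n
  proof (cases "m = n")
    case False
    then have "Suc m \<le> n" using that by simp
    then have "P t (Suc m) \<le> P t n" by (rule P_mono)
    then show ?thesis by (simp add: P_Suc)
  qed simp
  have "(\<exists>n. j = P t n + t n) \<longleftrightarrow> (\<exists>n<m. j = P t n + t n)"
  proof
    assume "\<exists>n. j = P t n + t n"
    then obtain n where n: "j = P t n + t n" by blast
    have "n < m"
    proof (rule ccontr)
      assume "\<not> n < m"
      then have "P t m + t m \<le> P t n + t n" using \<open>\<And>n. m \<le> n \<Longrightarrow> _\<close> by simp
      then show False using j n by simp
    qed
    then show "\<exists>n<m. j = P t n + t n" using n by blast
  qed blast
  then show ?thesis by (simp add: dig_def)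
qed

lemma dig_term: "dig t (P t m + t m) = 1"
  by (auto simp: dig_def)

lemma P_agree: "(\<forall>k<m. u k = v k) \<Longrightarrow> n \<le> m \<Longrightarrow> P u n = P v n"
  unfolding P_def by (rule sum.cong) auto

lemma Nd_agree: "(\<forall>j<J. dig u j = dig v j) \<Longrightarrow> Nd u J = Nd v J"
  by (induction J) auto

lemma dig_agree:
  assumes "\<forall>k<m. u k = v k" "j < P u m + u m" "j < P v m + v m"
  shows "dig u j = dig v j"
proof -
  have "(\<exists>n<m. j = P u n + u n) \<longleftrightarrow> (\<exists>n<m. j = P v n + v n)"
    using assms(1) P_agree[OF assms(1)] by (metis less_imp_le)
  then have "dig u j = 1 \<longleftrightarrow> dig v j = 1" using digP assms(2,3) by blast
  then show ?thesis using dig_12[of u j] dig_12[of v j] by auto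
qed

lemma E_lex:
  assumes agree: "\<forall>k<m. u k = v k" and less: "u m < v m"
  shows "E u < E v"
proof -
  define D where "D = P u m + u m"
  have Pm: "P u m = P v m" using P_agree[OF agree] by simp
  have "\<forall>j<D. dig u j = dig v j"
    using dig_agree[OF agree] less Pm unfolding D_def by auto
  then have NdD: "Nd u D = Nd v D" by (rule Nd_agree)
  have du: "dig u D = 1" unfolding D_def by (rule dig_term)
  have "D < P v m + v m" using less Pm unfolding D_def by simp
  then have "dig v D = 1 \<longleftrightarrow> (\<exists>n<m. D = P v n + v n)" by (rule digP)
  moreover have "P v n + v n < D" if "n < m" for n
  proof -
    have "P v (Suc n) \<le> P v m" using that by (intro P_mono) simp
    then show ?thesis using Pm unfolding D_def by (simp add: P_Suc)
  qed
  ultimately have dv: "dig v D = 2" using dig_12[of v D] by auto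
  have "E u = (real (Nd u (Suc D)) + T u (Suc D)) / 4 ^ Suc D" by (rule E_split)
  also have "\<dots> < (real (Nd v (Suc D)) + T v (Suc D)) / 4 ^ Suc D"
    using T_bounds[of u "Suc D"] T_bounds[of v "Suc D"] NdD du dv
    by (intro divide_strict_right_mono) auto
  also have "\<dots> = E v" by (rule E_split[symmetric])
  finally show ?thesis .
qed

definition Ef :: "(nat \<Rightarrow> nat) \<Rightarrow> nat \<Rightarrow> real" where
  "Ef t n = real (Nd t (P t n)) / 4 ^ (P t n)"

lemma Nd_div_mono: "J \<le> J' \<Longrightarrow> real (Nd t J) / 4 ^ J \<le> real (Nd t J') / 4 ^ J'"
proof (induction J' rule: dec_induct)
  case (step n)
  have "real (Nd t n) / 4 ^ n \<le> real (4 * Nd t n + dig t n) / 4 ^ Suc n"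
    by (simp add: field_simps)
  then show ?case using step by simp
qed simp

lemma Ef_le_E: "Ef t n \<le> E t"
  unfolding Ef_def E_split[of t "P t n"] using T_bounds[of t "P t n"]
  by (intro divide_right_mono) auto

lemma E_le_Ef: "E t \<le> Ef t n + 1 / 4 ^ n"
proof -
  have "E t = Ef t n + T t (P t n) / 4 ^ P t n"
    unfolding Ef_def E_split[of t "P t n"] by (simp add: add_divide_distrib)
  also have "T t (P t n) / 4 ^ P t n \<le> 1 / 4 ^ P t n"
    using T_bounds[of t "P t n"] by (intro divide_right_mono) auto
  also have "1 / 4 ^ P t n \<le> (1 / 4 ^ n :: real)"
    using P_ge[of n t] by (intro divide_left_mono power_increasing) auto
  finally show ?thesis by simp
qed

lemma Ef_mono: "n \<le> n' \<Longrightarrow> Ef t n \<le> Ef t n'"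
  unfolding Ef_def by (intro Nd_div_mono P_mono)

lemma Ef_agree: "(\<forall>k<n. u k = v k) \<Longrightarrow> Ef u n = Ef v n"
proof -
  assume a: "\<forall>k<n. u k = v k"
  have Pn: "P u n = P v n" using P_agree[OF a] by simp
  have "\<forall>j<P u n. dig u j = dig v j"
    using dig_agree[OF a] Pn by auto
  then show ?thesis unfolding Ef_def Pn[symmetric] by (simp add: Nd_agree)
qed

lemma Nd_div: "J \<le> J' \<Longrightarrow> Nd t J' div 4 ^ (J' - J) = Nd t J"
proof (induction J' rule: dec_induct)
  case (step n)
  have d4: "dig t n < 4" using dig_12[of t n] by auto
  have "Suc n - J = Suc (n - J)" using step(1) by simp
  then have "Nd t (Suc n) div 4 ^ (Suc n - J) = ((4 * Nd t n + dig t n) div 4) div 4 ^ (n - J)"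
    by (simp add: div_mult2_eq)
  also have "(4 * Nd t n + dig t n) div 4 = Nd t n" using d4 by simp
  finally show ?case using step by simp
qed simp

lemma dig_extract: "j < J \<Longrightarrow> (Nd t J div 4 ^ (J - Suc j)) mod 4 = dig t j"
proof -
  assume "j < J"
  then have "Nd t J div 4 ^ (J - Suc j) = Nd t (Suc j)" by (intro Nd_div) simp
  moreover have "dig t j < 4" using dig_12[of t j] by auto
  ultimately show ?thesis by simp
qed

lemma floor_Nd:
  assumes "\<bar>w - E t\<bar> \<le> 1 / (4 * 4 ^ J)"
  shows "\<lfloor>4 ^ J * w\<rfloor> = int (Nd t J)"
proof -
  have e: "4 ^ J * E t = real (Nd t J) + T t J"
    using E_split[of t J] by simp
  have "\<bar>4 ^ J * w - 4 ^ J * E t\<bar> \<le> 1/4"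
  proof -
    have "\<bar>4 ^ J * w - 4 ^ J * E t\<bar> = 4 ^ J * \<bar>w - E t\<bar>"
      by (simp add: abs_mult right_diff_distrib[symmetric])
    also have "\<dots> \<le> 4 ^ J * (1 / (4 * 4 ^ J))" using assms by (intro mult_left_mono) auto
    also have "\<dots> = 1/4" by simp
    finally show ?thesis .
  qed
  then have "real (Nd t J) \<le> 4 ^ J * w" "4 ^ J * w < real (Nd t J) + 1"
    using e T_bounds[of t J] by (simp_all only: e abs_le_iff) linarith+
  then show ?thesis by linarith
qed

definition cnt :: "(nat \<Rightarrow> nat) \<Rightarrow> nat \<Rightarrow> nat" where
  "cnt t j = (\<Sum>i<j. if dig t i = 1 then 1 else 0)"

lemma dig_in_block: "s < t r \<Longrightarrow> dig t (P t r + s) = 2"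
proof -
  assume s: "s < t r"
  have "\<not> (\<exists>n<r. P t r + s = P t n + t n)"
  proof
    assume "\<exists>n<r. P t r + s = P t n + t n"
    then obtain n where "n < r" "P t r + s = P t n + t n" by blast
    moreover have "P t (Suc n) \<le> P t r" using \<open>n < r\<close> by (intro P_mono) simp
    ultimately show False by (simp add: P_Suc)
  qed
  then show ?thesis using digP[of "P t r + s" t r] s dig_12[of t "P t r + s"] by auto
qed

lemma cnt_in_block: "s \<le> t r \<Longrightarrow> cnt t (P t r + s) = cnt t (P t r)"
proof (induction s)
  case (Suc s)
  then have "cnt t (P t r + Suc s) = cnt t (P t r + s)"
    using dig_in_block[of s t r] by (simp add: cnt_def)
  then show ?case using Suc by simp
qed simp

lemma cnt_P: "cnt t (P t r) = r"
proof (induction r)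
  case 0 then show ?case by (simp add: cnt_def P_def)
next
  case (Suc r)
  have "cnt t (P t (Suc r)) = cnt t (Suc (P t r + t r))" by (simp add: P_Suc)
  also have "\<dots> = cnt t (P t r + t r) + 1" using dig_term[of t r] by (simp add: cnt_def)
  also have "\<dots> = Suc r" using cnt_in_block[of "t r" t r] Suc by simp
  finally show ?case .
qed

lemma cnt_block: "s \<le> t r \<Longrightarrow> cnt t (P t r + s) = r"
  using cnt_in_block cnt_P by simp

lemma cover: "\<exists>r s. s \<le> t r \<and> j = P t r + s"
proof -
  have ex: "\<exists>r. j < P t (Suc r)" using P_ge[of "Suc j" t] by (intro exI[of _ j]) simp
  define r where "r = (LEAST r. j < P t (Suc r))"
  have jr: "j < P t (Suc r)" unfolding r_def by (rule LeastI_ex[OF ex])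
  have "P t r \<le> j"
  proof (cases r)
    case (Suc r')
    then have "\<not> j < P t (Suc r')" unfolding r_def
      using not_less_Least[of r' "\<lambda>r. j < P t (Suc r)"] Suc r_def by simp
    then show ?thesis using Suc by simp
  qed (simp add: P_def)
  then show ?thesis using jr by (intro exI[of _ r] exI[of _ "j - P t r"]) (auto simp: P_Suc)
qed

lemma sum_ind_card: "(\<Sum>j<(J::nat). if Q j then 1 else (0::nat)) = card {j. j < J \<and> Q j}"
proof (induction J)
  case (Suc J)
  have "{j. j < Suc J \<and> Q j} = {j. j < J \<and> Q j} \<union> (if Q J then {J} else {})"
    by (auto simp: less_Suc_eq)
  then show ?case using Suc by (auto simp: card_insert_if)
qed simp

lemma decode_val:
  assumes "P t r + t r < J"
  shows "(\<Sum>j<J. if cnt t j = r \<and> dig t j = 2 then 1 else (0::nat)) = t r"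
proof -
  have "{j. j < J \<and> cnt t j = r \<and> dig t j = 2} = {P t r ..< P t r + t r}"
  proof (intro set_eqI iffI)
    fix j assume j: "j \<in> {j. j < J \<and> cnt t j = r \<and> dig t j = 2}"
    obtain r' s where rs: "s \<le> t r'" "j = P t r' + s" using cover by blast
    then have "r' = r" using j cnt_block by auto
    moreover have "s \<noteq> t r'" using j rs dig_term[of t r'] by auto
    ultimately show "j \<in> {P t r ..< P t r + t r}" using rs by auto
  next
    fix j assume j: "j \<in> {P t r ..< P t r + t r}"
    then obtain s where s: "s < t r" "j = P t r + s" by (metis atLeastLessThan_iff le_Suc_ex nat_add_left_cancel_less)
    then show "j \<in> {j. j < J \<and> cnt t j = r \<and> dig t j = 2}"
      using assms cnt_block[of s t r] dig_in_block[of s t r] by auto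
  qed
  then show ?thesis by (simp add: sum_ind_card)
qed

lemma cnt_mono: "j \<le> j' \<Longrightarrow> cnt t j \<le> cnt t j'"
  unfolding cnt_def by (rule sum_mono2) auto

lemma decode_succ: "Suc r \<le> cnt t J \<Longrightarrow> P t r + t r < J"
proof -
  assume a: "Suc r \<le> cnt t J"
  obtain r' s where rs: "s \<le> t r'" "J = P t r' + s" using cover by blast
  then have "Suc r \<le> r'" using a cnt_block by auto
  then have "P t (Suc r) \<le> P t r'" by (rule P_mono)
  then show ?thesis using rs by (simp add: P_Suc)
qed

lemma decode_eventually: "P t (Suc r) \<le> J \<Longrightarrow> Suc r \<le> cnt t J"
  using cnt_mono[of "P t (Suc r)" J t] cnt_P[of t "Suc r"] by simp


definition cntb :: "nat \<Rightarrow> (nat \<Rightarrow> nat) \<Rightarrow> nat \<Rightarrow> nat" where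
  "cntb b p i = (\<Sum>j<i. if p (2 * j) = b then 1 else 0)"

definition xsq :: "(nat \<Rightarrow> nat) \<Rightarrow> nat \<Rightarrow> nat \<Rightarrow> nat" where
  "xsq p j l = p (2 * prod_encode (j, l) + 1)"

definition chg :: "(nat \<Rightarrow> nat) \<Rightarrow> nat \<Rightarrow> nat \<Rightarrow> nat" where
  "chg p i k = (\<Sum>j<i. if (\<exists>l<Suc k. xsq p (Suc j) l \<noteq> xsq p j l) then 1 else 0)"

definition tst :: "nat \<Rightarrow> (nat \<Rightarrow> nat) \<Rightarrow> nat \<Rightarrow> nat \<Rightarrow> nat" where
  "tst b p i m = (if m mod 3 = 0 then (if m div 3 < cntb b p i then 1 else 0)
                  else if m mod 3 = 1 then chg p i (m div 3) else xsq p i (m div 3))"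

definition endpt :: "(nat \<Rightarrow> nat) \<Rightarrow> nat \<Rightarrow> nat" where
  "endpt t i = 4 ^ P t i + Nd t (P t i)"

definition Kval :: "(nat \<Rightarrow> nat) \<Rightarrow> nat \<Rightarrow> nat" where
  "Kval p i = prod_encode (prod_encode (2 * endpt (tst 1 p i) i - 1, 4 ^ P (tst 1 p i) i - 1),
                           prod_encode (2 * endpt (tst 0 p i) i, 4 ^ P (tst 0 p i) i - 1))"

definition MK :: "nat \<Rightarrow> nat" where "MK i = 2 * prod_encode (i, i) + 2"

definition Kc :: "nat \<Rightarrow> nat" where
  "Kc w = (if pd1 w mod 2 = 0 then 1
           else if MK (pd1 w div 2) \<le> llen (pd2 w) then Suc (Kval (lnth (pd2 w)) (pd1 w div 2)) else 0)"

definition digb :: "(nat \<Rightarrow> nat) \<Rightarrow> nat \<Rightarrow> nat" where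
  "digb t j = (if \<exists>n<Suc j. j = P t n + t n then 1 else 2)"

lemma digb_eq: "digb t j = dig t j"
proof -
  have "(\<exists>n<Suc j. j = P t n + t n) \<longleftrightarrow> (\<exists>n. j = P t n + t n)"
    using P_ge[of _ t] by (metis le_add1 le_imp_less_Suc order.trans)
  then show ?thesis by (simp add: digb_def dig_def)
qed

lemma rfun_Nd:
  assumes d: "rfun (\<lambda>w. digb (t (pd1 w)) (pd2 w))" and J: "rfun J"
  shows "rfun (\<lambda>x. Nd (t x) (J x))"
proof -
  have "nrec (\<lambda>x. 0) (\<lambda>x j acc. 4 * acc + digb (t x) j) x n = Nd (t x) n" for x n
    by (induction n) (simp_all add: digb_eq)
  moreover have "rfun (\<lambda>x. nrec (\<lambda>x. 0) (\<lambda>x j acc. 4 * acc + digb (t x) j) x (J x))"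
  proof (rule rfun_nrec[OF rfun_const _ J])
    show "rfun (\<lambda>w. 4 * pd2 (pd2 w) + digb (t (pd1 w)) (pd1 (pd2 w)))"
      by (intro rfun_add rfun_mult rfun_const rfun_snd rfun_id rfun_comp2[OF d] rfun_fst)
  qed
  ultimately show ?thesis by simp
qed

lemma rfun_P:
  assumes "rfun (\<lambda>w. t (pd1 w) (pd2 w))" "rfun m"
  shows "rfun (\<lambda>x. P (t x) (m x))"
  unfolding P_def by (intro rfun_sum rfun_Suc assms)

lemma rfun_digb:
  assumes "rpred (\<lambda>x. \<exists>n<Suc (j x). j x = P (t x) n + t x n)"
  shows "rfun (\<lambda>x. digb (t x) (j x))"
  unfolding digb_def by (intro rpred_if assms rfun_const)

lemma rfun_Kc: "rfun Kc"
  unfolding Kc_def Kval_def endpt_def tst_def cntb_def chg_def xsq_def MK_def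
  by (intro rfun_intros rfun_Nd rfun_P rfun_digb)

lemma triangle_mono: "n \<le> n' \<Longrightarrow> triangle n \<le> triangle n'"
  by (induction n' rule: dec_induct) auto

lemma pe_mono: "a \<le> c \<Longrightarrow> b \<le> d \<Longrightarrow> prod_encode (a, b) \<le> prod_encode (c, d)"
  unfolding prod_encode_def using triangle_mono[of "a + b" "c + d"] by simp

lemma tst_local:
  assumes fg: "\<forall>j<MK i. f j = g j" and m: "m < i"
  shows "tst b f i m = tst b g i m"
proof -
  have k: "m div 3 < i" using m by simp
  have "2 * x < MK i" if "x < i" for x
    using le_prod_encode_1[of i i] that unfolding MK_def by linarith
  then have cb: "cntb b f i = cntb b g i"
    unfolding cntb_def using fg by (intro sum.cong) auto
  have xq: "xsq f j l = xsq g j l" if "j \<le> i" "l \<le> i" for j l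
  proof -
    have "prod_encode (j, l) \<le> prod_encode (i, i)" using that by (rule pe_mono)
    then show ?thesis unfolding xsq_def using fg by (simp add: MK_def)
  qed
  have ch: "chg f i (m div 3) = chg g i (m div 3)"
  proof -
    have "xsq f (Suc j) l = xsq g (Suc j) l \<and> xsq f j l = xsq g j l" if "j < i" "l < Suc (m div 3)" for j l
      using xq[of "Suc j" l] xq[of j l] that k by simp
    then show ?thesis unfolding chg_def by (intro sum.cong refl) auto
  qed
  show ?thesis unfolding tst_def using cb ch xq[of i "m div 3"] k by simp
qed

lemma Kval_local:
  assumes fg: "\<forall>j<MK i. f j = g j"
  shows "Kval f i = Kval g i"
proof -
  have main: "P (tst b f i) i = P (tst b g i) i \<and> Nd (tst b f i) (P (tst b f i) i) = Nd (tst b g i) (P (tst b g i) i)" for b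
  proof -
    have ag: "\<forall>k<i. tst b f i k = tst b g i k" using tst_local[OF fg] by blast
    have Pe: "P (tst b f i) i = P (tst b g i) i" using P_agree[OF ag] by simp
    have "\<forall>j<P (tst b f i) i. dig (tst b f i) j = dig (tst b g i) j"
      using dig_agree[OF ag] Pe by auto
    then show ?thesis using Pe Nd_agree by metis
  qed
  have e: "endpt (tst b f i) i = endpt (tst b g i) i" for b
    using main[of b] unfolding endpt_def by metis
  have p: "P (tst b f i) i = P (tst b g i) i" for b using main[of b] by blast
  show ?thesis unfolding Kval_def by (simp only: e p)
qed

definition enc :: "(nat \<Rightarrow> nat) \<Rightarrow> nat \<Rightarrow> nat" where
  "enc p k = list_encode (map p [0..<k])"

lemma llen_enc: "llen (enc p k) = k"
  unfolding enc_def llen_encode by simp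

lemma lnth_enc: "j < k \<Longrightarrow> lnth (enc p k) j = p j"
  unfolding enc_def by (simp add: lnth_encode)

definition Fc :: "(nat \<Rightarrow> nat) \<Rightarrow> (nat \<Rightarrow> nat) \<Rightarrow> (nat \<Rightarrow> nat) option" where
  "Fc c p = (if \<forall>m. \<exists>k. c (prod_encode (m, enc p k)) \<noteq> 0
     then Some (\<lambda>m. c (prod_encode (m, enc p (LEAST k. c (prod_encode (m, enc p k)) \<noteq> 0))) - 1)
     else None)"

lemma computable_Fc: "rfun c \<Longrightarrow> computable (Fc c)"
proof -
  assume "rfun c"
  then obtain e where e: "\<And>x. evalr e x (c x)" unfolding rfun_def by blast
  show ?thesis unfolding computable_def
  proof (intro exI[of _ e] allI impI)
    fix p q n
    assume F: "Fc c p = Some q"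
    then have ex: "\<forall>m. \<exists>k. c (prod_encode (m, enc p k)) \<noteq> 0" unfolding Fc_def by (metis option.distinct(1))
    have q: "q = (\<lambda>m. c (prod_encode (m, enc p (LEAST k. c (prod_encode (m, enc p k)) \<noteq> 0))) - 1)"
    proof -
      have "Fc c p = Some (\<lambda>m. c (prod_encode (m, enc p (LEAST k. c (prod_encode (m, enc p k)) \<noteq> 0))) - 1)"
        unfolding Fc_def by (rule if_P[OF ex])
      then show ?thesis using F by simp
    qed
    define k where "k = (LEAST k. c (prod_encode (n, enc p k)) \<noteq> 0)"
    have nz: "c (prod_encode (n, enc p k)) \<noteq> 0"
      using LeastI_ex[of "\<lambda>k. c (prod_encode (n, enc p k)) \<noteq> 0"] ex unfolding k_def by blast
    have z: "c (prod_encode (n, enc p k')) = 0" if "k' < k" for k'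
      using not_less_Least[of k' "\<lambda>k. c (prod_encode (n, enc p k)) \<noteq> 0"] that unfolding k_def by blast
    have "q n = c (prod_encode (n, enc p k)) - 1" unfolding q k_def by (rule refl)
    then have "c (prod_encode (n, enc p k)) = Suc (q n)" using nz by simp
    then show "\<exists>k. evalr e (prod_encode (n, list_encode (map p [0..<k]))) (Suc (q n)) \<and>
              (\<forall>k'<k. evalr e (prod_encode (n, list_encode (map p [0..<k']))) 0)"
    proof (intro exI[of _ k] conjI allI impI)
      show "evalr e (prod_encode (n, list_encode (map p [0..<k]))) (Suc (q n))"
        using e[of "prod_encode (n, enc p k)"] \<open>c (prod_encode (n, enc p k)) = Suc (q n)\<close>
        unfolding enc_def by simp
      fix k' assume "k' < k"
      then show "evalr e (prod_encode (n, list_encode (map p [0..<k']))) 0"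
        using e[of "prod_encode (n, enc p k')"] z unfolding enc_def by simp
    qed
  qed
qed

lemma Fc_eval:
  assumes ex: "\<forall>m. \<exists>k. c (prod_encode (m, enc p k)) \<noteq> 0"
    and val: "\<forall>m k. c (prod_encode (m, enc p k)) \<noteq> 0 \<longrightarrow> c (prod_encode (m, enc p k)) = Suc (q m)"
  shows "Fc c p = Some q"
proof -
  have "c (prod_encode (m, enc p (LEAST k. c (prod_encode (m, enc p k)) \<noteq> 0))) - 1 = q m" for m
  proof -
    have "c (prod_encode (m, enc p (LEAST k. c (prod_encode (m, enc p k)) \<noteq> 0))) \<noteq> 0"
      using LeastI_ex[of "\<lambda>k. c (prod_encode (m, enc p k)) \<noteq> 0"] ex by blast
    then show ?thesis using val[rule_format, of m "LEAST k. c (prod_encode (m, enc p k)) \<noteq> 0"] by simp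
  qed
  then have "(\<lambda>m. c (prod_encode (m, enc p (LEAST k. c (prod_encode (m, enc p k)) \<noteq> 0))) - 1) = q" by (rule ext)
  then show ?thesis unfolding Fc_def by (subst if_P[OF ex]) simp
qed

definition Kout :: "(nat \<Rightarrow> nat) \<Rightarrow> nat \<Rightarrow> nat" where
  "Kout p m = (if m mod 2 = 0 then 0 else Kval p (m div 2))"

lemma K_Fc: "Fc Kc p = Some (Kout p)"
proof (rule Fc_eval)
  show "\<forall>m. \<exists>k. Kc (prod_encode (m, enc p k)) \<noteq> 0"
  proof
    fix m show "\<exists>k. Kc (prod_encode (m, enc p k)) \<noteq> 0"
      by (intro exI[of _ "MK (m div 2)"]) (simp add: Kc_def llen_enc)
  qed
  show "\<forall>m k. Kc (prod_encode (m, enc p k)) \<noteq> 0 \<longrightarrow> Kc (prod_encode (m, enc p k)) = Suc (Kout p m)"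
  proof (intro allI impI)
    fix m k assume nz: "Kc (prod_encode (m, enc p k)) \<noteq> 0"
    show "Kc (prod_encode (m, enc p k)) = Suc (Kout p m)"
    proof (cases "m mod 2 = 0")
      case True then show ?thesis by (simp add: Kc_def Kout_def)
    next
      case False
      then have le: "MK (m div 2) \<le> k" using nz by (simp add: Kc_def llen_enc split: if_splits)
      have "\<forall>j<MK (m div 2). lnth (enc p k) j = p j" using le lnth_enc by auto
      then have "Kval (lnth (enc p k)) (m div 2) = Kval p (m div 2)" by (rule Kval_local)
      then show ?thesis using False le by (simp add: Kc_def Kout_def llen_enc)
    qed
  qed
qed


definition chgset :: "(nat \<Rightarrow> nat) \<Rightarrow> nat \<Rightarrow> nat set" where
  "chgset p k = {j. \<exists>l<Suc k. xsq p (Suc j) l \<noteq> xsq p j l}"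

definition tlim :: "nat \<Rightarrow> (nat \<Rightarrow> nat) \<Rightarrow> (nat \<Rightarrow> nat) \<Rightarrow> nat \<Rightarrow> nat" where
  "tlim b p L m = (if m mod 3 = 0 then (if \<exists>i. m div 3 < cntb b p i then 1 else 0)
                  else if m mod 3 = 1 then card (chgset p (m div 3)) else L (m div 3))"

lemma div3: "(3 * (k::nat) + 1) div 3 = k" "(3 * k + 1) mod 3 = 1" "(3 * k + 2) div 3 = k" "(3 * k + 2) mod 3 = 2"
  "(3 * k) div 3 = k" "(3 * k) mod 3 = 0"
  by presburger+

lemma chg_card: "chg p i k = card (chgset p k \<inter> {..<i})"
  unfolding chg_def chgset_def sum_ind_card by (rule arg_cong[where f=card]) auto

lemma cntb_mono: "i \<le> i' \<Longrightarrow> cntb b p i \<le> cntb b p i'"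
  unfolding cntb_def by (rule sum_mono2) auto

context
  fixes p L :: "nat \<Rightarrow> nat"
  assumes conv: "\<And>k. eventually (\<lambda>i. xsq p i k = L k) sequentially"
begin

lemma chg_bound: "\<exists>N. \<forall>j\<ge>N. j \<notin> chgset p k"
proof -
  have "eventually (\<lambda>i. \<forall>l\<in>{..<Suc k}. xsq p i l = L l) sequentially"
    using conv by (intro eventually_ball_finite) auto
  then obtain N where N: "\<And>i l. i \<ge> N \<Longrightarrow> l < Suc k \<Longrightarrow> xsq p i l = L l"
    unfolding eventually_sequentially by auto
  show ?thesis unfolding chgset_def using N by (intro exI[of _ N]) (auto simp: le_Suc_eq)
qed

lemma chgset_fin: "finite (chgset p k)"
proof -
  obtain N where "\<forall>j\<ge>N. j \<notin> chgset p k" using chg_bound by blast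
  then have "chgset p k \<subseteq> {..<N}" by (auto simp: not_le[symmetric])
  then show ?thesis using finite_subset by blast
qed

lemma tst_eventually: "eventually (\<lambda>i. tst b p i m = tlim b p L m) sequentially"
proof -
  consider "m mod 3 = 0" | "m mod 3 = 1" | "m mod 3 = 2" by linarith
  then show ?thesis
  proof cases
    case 1
    show ?thesis
    proof (cases "\<exists>i. m div 3 < cntb b p i")
      case True
      then obtain i0 where i0: "m div 3 < cntb b p i0" by blast
      have "eventually (\<lambda>i. i0 \<le> i) sequentially" by (rule eventually_ge_at_top)
      then show ?thesis
      proof (rule eventually_mono)
        fix i assume "i0 \<le> i"
        then have "m div 3 < cntb b p i" using i0 cntb_mono[of i0 i b p] by simp
        then show "tst b p i m = tlim b p L m" using 1 True by (simp add: tst_def tlim_def)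
      qed
    next
      case False
      then show ?thesis using 1 by (simp add: tst_def tlim_def)
    qed
  next
    case 2
    obtain N where N: "\<forall>j\<ge>N. j \<notin> chgset p (m div 3)" using chg_bound by blast
    have "eventually (\<lambda>i. N \<le> i) sequentially" by (rule eventually_ge_at_top)
    then show ?thesis
    proof (rule eventually_mono)
      fix i assume "N \<le> i"
      then have "chgset p (m div 3) \<inter> {..<i} = chgset p (m div 3)" using N by (auto simp: not_le[symmetric])
      then show "tst b p i m = tlim b p L m" using 2 by (simp add: tst_def tlim_def chg_card)
    qed
  next
    case 3
    show ?thesis using conv[of "m div 3"] 3 by (simp add: tst_def tlim_def)
  qed
qed

lemma tst_eventually_below: "eventually (\<lambda>i. \<forall>m<n. tst b p i m = tlim b p L m) sequentially"
proof -
  have "eventually (\<lambda>i. \<forall>m\<in>{..<n}. tst b p i m = tlim b p L m) sequentially"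
    using tst_eventually by (intro eventually_ball_finite) auto
  then show ?thesis by (rule eventually_mono) auto
qed

lemma tst_first_diff:
  assumes agree: "\<forall>k<m. tst b p i k = tlim b p L k" and ne: "tst b p i m \<noteq> tlim b p L m"
  shows "tst b p i m < tlim b p L m"
proof -
  consider "m mod 3 = 0" | "m mod 3 = 1" | "m mod 3 = 2" by linarith
  then show ?thesis
  proof cases
    case 1
    have t: "tst b p i m = (if m div 3 < cntb b p i then 1 else 0)" using 1 by (simp add: tst_def)
    have l: "tlim b p L m = (if \<exists>i. m div 3 < cntb b p i then 1 else 0)" using 1 by (simp add: tlim_def)
    show ?thesis
    proof (cases "m div 3 < cntb b p i")
      case True
      then have "\<exists>i. m div 3 < cntb b p i" by blast
      then show ?thesis using ne t l True by simp
    next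
      case False
      then show ?thesis using ne t l by (simp split: if_splits)
    qed
  next
    case 2
    have "chg p i (m div 3) \<le> card (chgset p (m div 3))"
      unfolding chg_card by (rule card_mono[OF chgset_fin]) auto
    moreover have "tst b p i m = chg p i (m div 3)" using 2 by (simp add: tst_def)
    moreover have "tlim b p L m = card (chgset p (m div 3))" using 2 by (simp add: tlim_def)
    ultimately show ?thesis using ne by simp
  next
    case 3
    define k where "k = m div 3"
    have mk: "m = 3 * k + 2" using 3 div_mult_mod_eq[of m 3] unfolding k_def by simp
    have lt: "3 * k + 1 < m" using mk by simp
    have "tst b p i (3 * k + 1) = tlim b p L (3 * k + 1)" using agree lt by blast
    moreover have "tst b p i (3 * k + 1) = chg p i k" unfolding tst_def div3 by simp
    moreover have "tlim b p L (3 * k + 1) = card (chgset p k)" unfolding tlim_def div3 by simp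
    ultimately have c: "card (chgset p k \<inter> {..<i}) = card (chgset p k)"
      by (simp add: chg_card)
    have sub: "chgset p k \<inter> {..<i} \<subseteq> chgset p k" by (rule Int_lower1)
    have eq: "chgset p k \<inter> {..<i} = chgset p k"
      by (rule card_subset_eq[OF chgset_fin sub c])
    have nochg: "\<And>j. i \<le> j \<Longrightarrow> xsq p (Suc j) k = xsq p j k"
    proof -
      fix j assume ij: "i \<le> j"
      have "j \<notin> chgset p k"
      proof
        assume "j \<in> chgset p k"
        then have "j \<in> chgset p k \<inter> {..<i}" by (subst eq)
        then show False using ij by simp
      qed
      then show "xsq p (Suc j) k = xsq p j k" unfolding chgset_def by blast
    qed
    have stable: "\<And>j. i \<le> j \<Longrightarrow> xsq p j k = xsq p i k"
    proof -
      fix j assume "i \<le> j"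
      then show "xsq p j k = xsq p i k"
        by (induction j rule: dec_induct) (use nochg in auto)
    qed
    obtain N where "\<And>j. N \<le> j \<Longrightarrow> xsq p j k = L k"
      using conv[of k] unfolding eventually_sequentially by blast
    then have "L k = xsq p i k" using stable[of "max N i"] by simp
    then have "tst b p i m = tlim b p L m" using 3 unfolding k_def by (simp add: tst_def tlim_def)
    then show ?thesis using ne by simp
  qed
qed

lemma E_tst_le: "E (tst b p i) \<le> E (tlim b p L)"
proof (cases "tst b p i = tlim b p L")
  case False
  then have ex: "\<exists>m. tst b p i m \<noteq> tlim b p L m" by auto
  define m where "m = (LEAST m. tst b p i m \<noteq> tlim b p L m)"
  have ne: "tst b p i m \<noteq> tlim b p L m"
    using LeastI_ex[OF ex] unfolding m_def .
  have agree: "\<forall>k<m. tst b p i k = tlim b p L k"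
    using not_less_Least[of _ "\<lambda>m. tst b p i m \<noteq> tlim b p L m"] unfolding m_def by blast
  show ?thesis using E_lex[OF agree tst_first_diff[OF agree ne]] by simp
qed simp

lemma Ef_tst_le: "Ef (tst b p i) i \<le> E (tlim b p L)"
  using Ef_le_E E_tst_le order.trans by blast

lemma Ef_tst_approx:
  assumes "0 < e"
  shows "\<exists>i. E (tlim b p L) - e < Ef (tst b p i) i"
proof -
  obtain n where n: "(1/4::real) ^ n < e"
    using real_arch_pow_inv[OF assms, of "1/4"] by auto
  have "eventually (\<lambda>i. (\<forall>m<n. tst b p i m = tlim b p L m) \<and> n \<le> i) sequentially"
    using tst_eventually_below eventually_ge_at_top by (rule eventually_conj)
  then obtain i where i: "\<forall>m<n. tst b p i m = tlim b p L m" "n \<le> i"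
    unfolding eventually_sequentially by blast
  have "E (tlim b p L) - e < Ef (tlim b p L) n"
    using E_le_Ef[of "tlim b p L" n] n by (simp add: power_one_over)
  also have "\<dots> = Ef (tst b p i) n" using Ef_agree i(1) by metis
  also have "\<dots> \<le> Ef (tst b p i) i" using Ef_mono i(2) by blast
  finally show ?thesis by blast
qed

end


lemma int_decode_even: "int_decode (2 * Y) = int Y"
  by (simp add: int_decode_def sum_decode_def)

lemma int_decode_odd: "1 \<le> X \<Longrightarrow> int_decode (2 * X - 1) = - int X"
proof -
  assume X: "1 \<le> X"
  then obtain Z where Z: "X = Suc Z" by (metis Suc_le_D One_nat_def)
  have "2 * X - 1 = Suc (2 * Z)" using Z by simp
  moreover have "\<not> even (Suc (2 * Z))" by simp
  moreover have "Suc (2 * Z) div 2 = Z" by simp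
  ultimately show ?thesis using Z by (simp add: int_decode_def sum_decode_def)
qed

lemma nuQ_pos: "1 \<le> D \<Longrightarrow> nuQ (prod_encode (2 * Y, D - 1)) = real Y / real D"
  by (simp add: nuQ_def int_decode_even)

lemma nuQ_neg: "1 \<le> X \<Longrightarrow> 1 \<le> D \<Longrightarrow> nuQ (prod_encode (2 * X - 1, D - 1)) = - real X / real D"
proof -
  assume "1 \<le> X" "1 \<le> D"
  then show ?thesis using int_decode_odd[of X] by (simp add: nuQ_def del: One_nat_def)
qed

lemma endpt_ratio: "real (endpt t i) / real (4 ^ P t i) = 1 + Ef t i"
  unfolding endpt_def Ef_def by (simp add: field_simps)

lemma Kval_interval:
  "(case prod_decode (Kval p n) of (a, b) \<Rightarrow> {nuQ a <..< nuQ b})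
     = {-(1 + Ef (tst 1 p n) n) <..< 1 + Ef (tst 0 p n) n}"
proof -
  have d: "1 \<le> (4::nat) ^ P t i" for t i by simp
  have e: "1 \<le> endpt t i" for t i unfolding endpt_def using d[of t i] by linarith
  have "nuQ (prod_encode (2 * endpt (tst 1 p n) n - 1, 4 ^ P (tst 1 p n) n - 1)) = -(1 + Ef (tst 1 p n) n)"
    using nuQ_neg[OF e d] endpt_ratio by (simp add: minus_divide_left[symmetric])
  moreover have "nuQ (prod_encode (2 * endpt (tst 0 p n) n, 4 ^ P (tst 0 p n) n - 1)) = 1 + Ef (tst 0 p n) n"
    using nuQ_pos[OF d] endpt_ratio by simp
  ultimately show ?thesis unfolding Kval_def by simp
qed

lemma union_intervals:
  fixes a b :: "nat \<Rightarrow> real"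
  assumes a0: "\<And>n. 0 \<le> a n" and b0: "\<And>n. 0 \<le> b n"
    and ale: "\<And>n. a n \<le> \<alpha>" and ble: "\<And>n. b n \<le> \<beta>"
    and aap: "\<And>e. 0 < e \<Longrightarrow> \<exists>n. \<alpha> - e < a n"
    and bap: "\<And>e. 0 < e \<Longrightarrow> \<exists>n. \<beta> - e < b n"
  shows "(\<Union>n. {-(1 + a n) <..< 1 + b n}) = {-(1 + \<alpha>) <..< 1 + \<beta>}"
proof (intro set_eqI iffI)
  fix y assume "y \<in> (\<Union>n. {-(1 + a n) <..< 1 + b n})"
  then obtain n where "-(1 + a n) < y" "y < 1 + b n" by auto
  then show "y \<in> {-(1 + \<alpha>) <..< 1 + \<beta>}" using ale[of n] ble[of n] by auto
next
  fix y assume y: "y \<in> {-(1 + \<alpha>) <..< 1 + \<beta>}"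
  show "y \<in> (\<Union>n. {-(1 + a n) <..< 1 + b n})"
  proof (cases "0 \<le> y")
    case True
    obtain n where "\<beta> - (1 + \<beta> - y) < b n" using bap[of "1 + \<beta> - y"] y by auto
    then have "y \<in> {-(1 + a n) <..< 1 + b n}" using True a0[of n] by auto
    then show ?thesis by blast
  next
    case False
    obtain n where "\<alpha> - (1 + \<alpha> + y) < a n" using aap[of "1 + \<alpha> + y"] y by auto
    then have "y \<in> {-(1 + a n) <..< 1 + b n}" using False b0[of n] by auto
    then show ?thesis by blast
  qed
qed

lemma proj_two:
  fixes a b :: real
  assumes "0 < a" "0 < b"
  defines "S \<equiv> {y. y \<le> -a \<or> b \<le> y}"
  shows "ProjR (0, S) \<noteq> {}"
    and "y \<in> ProjR (0, S) \<Longrightarrow> (y = -a \<and> a \<le> b) \<or> (y = b \<and> b \<le> a)"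
proof -
  have Seq: "S = {..-a} \<union> {b..}" unfolding S_def by auto
  have cl: "closed S" unfolding Seq by (intro closed_Un closed_atMost closed_atLeast)
  have ne: "S \<noteq> {}" using S_def by auto
  have inf: "infdist 0 S = min a b"
  proof (rule antisym)
    have "infdist 0 S \<le> dist 0 (-a)" by (rule infdist_le) (simp add: S_def)
    moreover have "infdist 0 S \<le> dist 0 b" by (rule infdist_le) (simp add: S_def)
    ultimately show "infdist 0 S \<le> min a b" using assms(1,2) by (simp add: dist_real_def)
  next
    have "\<forall>y\<in>S. min a b \<le> dist 0 y" unfolding S_def dist_real_def using assms(1,2) by auto
    then show "min a b \<le> infdist 0 S" unfolding infdist_notempty[OF ne]
      using ne by (intro cINF_greatest) auto
  qed
  have P: "ProjR (0, S) = {y \<in> S. \<bar>y\<bar> = min a b}" using cl ne inf by (simp add: ProjR_def)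
  show "ProjR (0, S) \<noteq> {}"
  proof (cases "a \<le> b")
    case True
    then have "-a \<in> {y \<in> S. \<bar>y\<bar> = min a b}" unfolding S_def using assms(1) by auto
    then show ?thesis unfolding P by blast
  next
    case False
    then have "b \<in> {y \<in> S. \<bar>y\<bar> = min a b}" unfolding S_def using assms(2) by auto
    then show ?thesis unfolding P by blast
  qed
  show "y \<in> ProjR (0, S) \<Longrightarrow> (y = -a \<and> a \<le> b) \<or> (y = b \<and> b \<le> a)"
  proof -
    assume "y \<in> ProjR (0, S)"
    then have "y \<in> S" "\<bar>y\<bar> = min a b" unfolding P by auto
    then show ?thesis unfolding S_def using assms(1,2) by (auto simp: min_def split: if_splits)
  qed
qed

lemma uniq_approx:
  fixes x x' :: real
  assumes "\<forall>i. \<bar>q i - x\<bar> \<le> (1/2) ^ i" "\<forall>i. \<bar>q i - x'\<bar> \<le> (1/2) ^ i"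
  shows "x = x'"
proof (rule ccontr)
  assume "x \<noteq> x'"
  then have "0 < \<bar>x - x'\<bar> / 2" by simp
  then obtain i where i: "(1/2::real) ^ i < \<bar>x - x'\<bar> / 2" using real_arch_pow_inv[of "\<bar>x - x'\<bar> / 2" "1/2"] by auto
  have "\<bar>x - x'\<bar> \<le> \<bar>q i - x\<bar> + \<bar>q i - x'\<bar>" by linarith
  also have "\<dots> \<le> 2 * (1/2) ^ i" using assms by (smt (verit))
  finally show False using i by simp
qed

lemma delta_real_approx:
  assumes "delta_real q = Some y"
  shows "\<forall>i. \<bar>nuQ (q i) - y\<bar> \<le> (1/2) ^ i"
proof -
  have ex: "\<exists>x. \<forall>i. \<bar>nuQ (q i) - x\<bar> \<le> (1/2) ^ i"
    using assms unfolding delta_real_def by (metis option.distinct(1))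
  have "delta_real q = Some (THE x. \<forall>i. \<bar>nuQ (q i) - x\<bar> \<le> (1/2) ^ i)"
    unfolding delta_real_def by (rule if_P[OF ex])
  then have y: "y = (THE x. \<forall>i. \<bar>nuQ (q i) - x\<bar> \<le> (1/2) ^ i)" using assms by simp
  have "\<exists>!x. \<forall>i. \<bar>nuQ (q i) - x\<bar> \<le> (1/2) ^ i"
    using ex uniq_approx[of "\<lambda>i. nuQ (q i)"] by (intro ex_ex1I) auto
  then show ?thesis unfolding y by (rule theI')
qed

lemma nuQ_0: "nuQ 0 = 0"
  by (simp add: nuQ_def prod_decode_0 int_decode_def sum_decode_def)

lemma delta_real_zero: "delta_real (\<lambda>n. 0) = Some 0"
proof -
  have h: "\<forall>i. \<bar>nuQ 0 - 0\<bar> \<le> (1/2::real) ^ i" by (simp add: nuQ_0)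
  have "(THE x. \<forall>i. \<bar>nuQ 0 - x\<bar> \<le> (1/2::real) ^ i) = 0"
    using h uniq_approx[of "\<lambda>_. nuQ 0"] by (intro the_equality) auto
  moreover have "\<exists>x. \<forall>i. \<bar>nuQ 0 - x\<bar> \<le> (1/2::real) ^ i" using h by blast
  ultimately show ?thesis unfolding delta_real_def by simp
qed

lemma bwt_lex:
  assumes fin: "finite {n. p (2 * n) = b}" and inf: "infinite {n. p (2 * n) = b'}"
  shows "E (tlim b p L) < E (tlim b' p L)"
proof -
  obtain N where N0: "\<forall>n\<in>{n. p (2 * n) = b}. n < N"
    using fin unfolding finite_nat_set_iff_bounded by blast
  have N: "\<And>n. p (2 * n) = b \<Longrightarrow> n < N" using N0 by blast
  have bnd: "cntb b p i \<le> N" for i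
  proof -
    have "cntb b p i \<le> (\<Sum>j<i. if j < N then 1 else 0)"
      unfolding cntb_def using N by (intro sum_mono) auto
    also have "\<dots> = min i N" by (rule sum_ind_less)
    finally show ?thesis by simp
  qed
  have exK: "\<exists>k. \<not> (\<exists>i. k < cntb b p i)" using bnd by (intro exI[of _ N]) (auto simp: not_less)
  define K where "K = (LEAST k. \<not> (\<exists>i. k < cntb b p i))"
  have K: "\<not> (\<exists>i. K < cntb b p i)" unfolding K_def by (rule LeastI_ex[OF exK])
  have belowK: "\<exists>i. k < cntb b p i" if "k < K" for k
    using not_less_Least[of k "\<lambda>k. \<not> (\<exists>i. k < cntb b p i)"] that unfolding K_def by blast
  have unb: "\<exists>i. k < cntb b' p i" for k
  proof (induction k)
    case 0
    obtain n where "0 \<le> n" "p (2 * n) = b'" using inf unfolding infinite_nat_iff_unbounded_le by blast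
    then have "cntb b' p (Suc n) = cntb b' p n + 1" by (simp add: cntb_def)
    then have "0 < cntb b' p (Suc n)" by simp
    then show ?case by blast
  next
    case (Suc k)
    then obtain i where i: "k < cntb b' p i" by blast
    obtain n where n: "i \<le> n" "p (2 * n) = b'" using inf unfolding infinite_nat_iff_unbounded_le by blast
    have "cntb b' p i \<le> cntb b' p n" using n(1) by (rule cntb_mono)
    moreover have "cntb b' p (Suc n) = cntb b' p n + 1" using n(2) by (simp add: cntb_def)
    ultimately have "Suc k < cntb b' p (Suc n)" using i by simp
    then show ?case by blast
  qed
  have agree: "\<forall>m<3 * K. tlim b p L m = tlim b' p L m"
  proof (intro allI impI)
    fix m assume m: "m < 3 * K"
    show "tlim b p L m = tlim b' p L m"
    proof (cases "m mod 3 = 0")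
      case True
      then have "m div 3 < K" using m by linarith
      then show ?thesis using True belowK unb by (simp add: tlim_def)
    qed (simp add: tlim_def)
  qed
  have "tlim b p L (3 * K) < tlim b' p L (3 * K)"
    using K unb[of K] by (simp add: tlim_def div3)
  then show ?thesis using E_lex agree by blast
qed


definition absA :: "nat \<Rightarrow> nat" where
  "absA q = (if pd1 q mod 2 = 0 then pd1 q div 2 else pd1 q div 2 + 1)"

definition Nq :: "nat \<Rightarrow> nat \<Rightarrow> nat" where
  "Nq q i = (4 ^ ((i - 2) div 2) * (absA q - Suc (pd2 q))) div Suc (pd2 q)"

definition ddg :: "nat \<Rightarrow> nat \<Rightarrow> nat \<Rightarrow> nat" where
  "ddg N J j = (N div 4 ^ (J - Suc j)) mod 4"

definition cntg :: "nat \<Rightarrow> nat \<Rightarrow> nat \<Rightarrow> nat" where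
  "cntg N J j = (\<Sum>i<j. if ddg N J i = 1 then 1 else 0)"

definition valg :: "nat \<Rightarrow> nat \<Rightarrow> nat \<Rightarrow> nat" where
  "valg N J r = (\<Sum>j<J. if cntg N J j = r \<and> ddg N J j = 2 then 1 else 0)"

definition Hc :: "nat \<Rightarrow> nat" where
  "Hc w = (if pd1 w = 0 then
             (if 2 \<le> llen (pd2 w) then Suc (if pd1 (lnth (pd2 w) 1) mod 2 = 0 \<and> 0 < pd1 (lnth (pd2 w) 1) then 1 else 0) else 0)
           else if pd1 w mod 2 = 0 then 1
           else if 3 \<le> llen (pd2 w) \<and>
                   Suc (3 * (pd1 w div 2) + 2) \<le> cntg (Nq (lnth (pd2 w) (llen (pd2 w) - 1)) (llen (pd2 w) - 1))
                        ((llen (pd2 w) - 1 - 2) div 2) ((llen (pd2 w) - 1 - 2) div 2)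
                then Suc (valg (Nq (lnth (pd2 w) (llen (pd2 w) - 1)) (llen (pd2 w) - 1))
                        ((llen (pd2 w) - 1 - 2) div 2) (3 * (pd1 w div 2) + 2))
                else 0)"

lemma rfun_Hc: "rfun Hc"
  unfolding Hc_def valg_def cntg_def ddg_def Nq_def absA_def
  by (intro rfun_intros)

lemma ddg_Nd: "j < J \<Longrightarrow> ddg (Nd t J) J j = dig t j"
  unfolding ddg_def by (rule dig_extract)

lemma cntg_Nd: "j \<le> J \<Longrightarrow> cntg (Nd t J) J j = cnt t j"
  unfolding cntg_def cnt_def by (intro sum.cong refl) (simp add: ddg_Nd)

lemma valg_Nd: "Suc r \<le> cntg (Nd t J) J J \<Longrightarrow> valg (Nd t J) J r = t r"
proof -
  assume a: "Suc r \<le> cntg (Nd t J) J J"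
  then have "P t r + t r < J" using cntg_Nd[of J J t] decode_succ by simp
  moreover have "valg (Nd t J) J r = (\<Sum>j<J. if cnt t j = r \<and> dig t j = 2 then 1 else 0)"
    unfolding valg_def by (intro sum.cong refl) (simp add: cntg_Nd ddg_Nd)
  ultimately show ?thesis using decode_val by simp
qed

lemma succ_Nd: "P t (Suc r) \<le> J \<Longrightarrow> Suc r \<le> cntg (Nd t J) J J"
  using cntg_Nd[of J J t] decode_eventually by simp

lemma abs_nuQ: "\<bar>nuQ q\<bar> = real (absA q) / real (Suc (pd2 q))"
proof -
  have "\<bar>int_decode (pd1 q)\<bar> = int (absA q)"
    by (auto simp: int_decode_def sum_decode_def absA_def even_iff_mod_2_eq_zero)
  then have "\<bar>real_of_int (int_decode (pd1 q))\<bar> = real (absA q)"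
    by (metis of_int_abs of_int_of_nat_eq)
  then show ?thesis by (simp add: nuQ_def case_prod_beta abs_divide)
qed

lemma sign_nuQ: "0 < nuQ q \<longleftrightarrow> (pd1 q mod 2 = 0 \<and> 0 < pd1 q)"
proof -
  have "0 < nuQ q \<longleftrightarrow> 0 < int_decode (pd1 q)"
    by (simp add: nuQ_def case_prod_beta zero_less_divide_iff)
  also have "\<dots> \<longleftrightarrow> (pd1 q mod 2 = 0 \<and> 0 < pd1 q)"
    by (auto simp: int_decode_def sum_decode_def even_iff_mod_2_eq_zero)
  finally show ?thesis .
qed

lemma Nq_correct:
  fixes y :: real
  assumes y: "\<bar>y\<bar> = 1 + E t" and i: "2 \<le> i" and ap: "\<bar>nuQ q - y\<bar> \<le> (1/2) ^ i"
  shows "Nq q i = Nd t ((i - 2) div 2)"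
proof -
  define J where "J = (i - 2) div 2"
  define A where "A = absA q"
  define B where "B = Suc (pd2 q)"
  have B0: "0 < B" unfolding B_def by simp
  have av: "\<bar>nuQ q\<bar> = real A / real B" unfolding A_def B_def by (rule abs_nuQ)
  have "(1/2::real) ^ i \<le> (1/2) ^ (2 * J + 2)" using i unfolding J_def
    by (intro power_decreasing) auto
  also have "(1/2::real) ^ (2 * J + 2) = 1 / (4 * 4 ^ J)"
    by (simp add: power_add power_mult power_divide)
  finally have e: "\<bar>nuQ q - y\<bar> \<le> 1 / (4 * 4 ^ J)" using ap by linarith
  have ab: "\<bar>(\<bar>nuQ q\<bar> - 1) - E t\<bar> \<le> 1 / (4 * 4 ^ J)"
  proof -
    have "\<bar>(\<bar>nuQ q\<bar> - 1) - E t\<bar> = \<bar>\<bar>nuQ q\<bar> - \<bar>y\<bar>\<bar>" using y by simp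
    also have "\<dots> \<le> \<bar>nuQ q - y\<bar>" by (rule abs_triangle_ineq3)
    finally show ?thesis using e by linarith
  qed
  have "1 / (4 * 4 ^ J) \<le> (1/4::real)" by (simp add: field_simps)
  then have "1 \<le> \<bar>nuQ q\<bar>" using ab E_bounds(1)[of t] by linarith
  then have AB: "B \<le> A" using av B0 by (simp add: field_simps)
  have w: "\<bar>nuQ q\<bar> - 1 = real (A - B) / real B" using av AB B0 by (simp add: field_simps of_nat_diff)
  have "\<lfloor>4 ^ J * (real (A - B) / real B)\<rfloor> = int (Nd t J)"
    using floor_Nd[OF ab[unfolded w]] .
  moreover have "4 ^ J * (real (A - B) / real B) = real (4 ^ J * (A - B)) / real B" by simp
  ultimately have "int ((4 ^ J * (A - B)) div B) = int (Nd t J)"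
    by (simp only: floor_divide_of_nat_eq)
  then show ?thesis unfolding Nq_def J_def A_def B_def by simp
qed

definition Hout :: "real \<Rightarrow> (nat \<Rightarrow> nat) \<Rightarrow> nat \<Rightarrow> nat" where
  "Hout y t m = (if m = 0 then (if 0 < y then 1 else 0) else if m mod 2 = 0 then 0 else t (3 * (m div 2) + 2))"

lemma H_Fc:
  assumes dq: "\<forall>i. \<bar>nuQ (q i) - y\<bar> \<le> (1/2) ^ i" and y: "y = 1 + E t \<or> y = -(1 + E t)"
  shows "Fc Hc q = Some (Hout y t)"
proof (rule Fc_eval)
  have ay: "\<bar>y\<bar> = 1 + E t" using y E_bounds(1)[of t] by auto
  have lnq: "lnth (enc q k) j = q j" if "j < k" for j k using lnth_enc that .
  show "\<forall>m. \<exists>k. Hc (prod_encode (m, enc q k)) \<noteq> 0"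
  proof
    fix m
    show "\<exists>k. Hc (prod_encode (m, enc q k)) \<noteq> 0"
    proof (cases "m = 0")
      case True then show ?thesis by (intro exI[of _ 2]) (simp add: Hc_def llen_enc)
    next
      case m0: False
      show ?thesis
      proof (cases "m mod 2 = 0")
        case True then show ?thesis using m0 by (simp add: Hc_def)
      next
        case False
        define r where "r = 3 * (m div 2) + 2"
        define J0 where "J0 = P t (Suc r)"
        define i where "i = 2 * J0 + 2"
        have iJ: "(i - 2) div 2 = J0" unfolding i_def by simp
        have N: "Nq (q i) i = Nd t J0" using Nq_correct[OF ay _ dq[rule_format, of i]] iJ unfolding i_def by simp
        have s: "Suc r \<le> cntg (Nd t J0) J0 J0" by (rule succ_Nd) (simp add: J0_def)
        have "Hc (prod_encode (m, enc q (Suc i))) \<noteq> 0"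
          using m0 False N s iJ lnq[of i "Suc i"] unfolding Hc_def r_def
          by (simp add: llen_enc i_def)
        then show ?thesis by blast
      qed
    qed
  qed
  show "\<forall>m k. Hc (prod_encode (m, enc q k)) \<noteq> 0 \<longrightarrow> Hc (prod_encode (m, enc q k)) = Suc (Hout y t m)"
  proof (intro allI impI)
    fix m k assume nz: "Hc (prod_encode (m, enc q k)) \<noteq> 0"
    show "Hc (prod_encode (m, enc q k)) = Suc (Hout y t m)"
    proof (cases "m = 0")
      case True
      then have k2: "2 \<le> k" using nz by (simp add: Hc_def llen_enc split: if_splits)
      have q1: "lnth (enc q k) 1 = q 1" using k2 lnq by simp
      have a1: "\<bar>nuQ (q 1) - y\<bar> \<le> 1/2" using dq[rule_format, of 1] by simp
      have "0 < nuQ (q 1) \<longleftrightarrow> 0 < y" using a1 ay E_bounds(1)[of t] by (auto simp: abs_if split: if_splits)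
      then have "(pd1 (q 1) mod 2 = 0 \<and> 0 < pd1 (q 1)) \<longleftrightarrow> 0 < y" using sign_nuQ by simp
      then show ?thesis using True k2 q1 by (simp add: Hc_def Hout_def llen_enc)
    next
      case m0: False
      show ?thesis
      proof (cases "m mod 2 = 0")
        case True then show ?thesis using m0 by (simp add: Hc_def Hout_def)
      next
        case False
        define i where "i = k - 1"
        define r where "r = 3 * (m div 2) + 2"
        define J where "J = (i - 2) div 2"
        have k3: "3 \<le> k" using nz m0 False by (simp add: Hc_def llen_enc split: if_splits)
        have qi: "lnth (enc q k) i = q i" using k3 lnq unfolding i_def by simp
        have N: "Nq (q i) i = Nd t J" unfolding J_def
          using Nq_correct[OF ay _ dq[rule_format, of i]] k3 unfolding i_def by simp
        have succ: "Suc r \<le> cntg (Nd t J) J J"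
          using nz m0 False k3 qi N unfolding Hc_def r_def J_def i_def by (simp add: llen_enc split: if_splits)
        have "Hc (prod_encode (m, enc q k)) = Suc (valg (Nd t J) J r)"
          using m0 False k3 qi N succ unfolding Hc_def r_def J_def i_def by (simp add: llen_enc)
        also have "\<dots> = Suc (t r)" using valg_Nd[OF succ] by simp
        finally show ?thesis using m0 False unfolding Hout_def r_def by simp
      qed
    qed
  qed
qed


lemma rep_prod_Some:
  "rep_prod d1 d2 r = Some (a, b) \<longleftrightarrow> d1 (\<lambda>n. r (2 * n)) = Some a \<and> d2 (\<lambda>n. r (2 * n + 1)) = Some b"
  by (auto simp: rep_prod_def split: option.splits)

lemma conv_of_lim:
  fixes xs :: "nat \<Rightarrow> nat \<Rightarrow> nat" and k :: nat
  assumes "(xs \<longlongrightarrow> L) sequentially"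
  shows "eventually (\<lambda>i. xs i k = L k) sequentially"
proof -
  have "continuous_on UNIV (\<lambda>f::nat \<Rightarrow> nat. f k)"
    by (rule continuous_on_product_then_coordinatewise) (rule continuous_on_id)
  then have "((\<lambda>i. xs i k) \<longlongrightarrow> L k) sequentially"
    using assms by (rule continuous_on_tendsto_compose) auto
  then show ?thesis by (simp add: tendsto_discrete)
qed

lemma Ef_nonneg: "0 \<le> Ef t n"
  unfolding Ef_def by simp

theorem lemma4p12:
  shows "sW_reducible (rep_prod rep_cantor rep_baire_seq) (rep_prod rep_bool rep_baire)
           (prob_prod BWT2 lim_baire)
           (rep_prod delta_real rep_closed_neg) delta_real ProjR"
  unfolding sW_reducible_def
proof (rule exI[of _ "Fc Hc"], rule exI[of _ "Fc Kc"], intro conjI allI impI)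
  show "computable (Fc Hc)" by (rule computable_Fc[OF rfun_Hc])
  show "computable (Fc Kc)" by (rule computable_Fc[OF rfun_Kc])
  fix G assume RG: "realizes (rep_prod delta_real rep_closed_neg) delta_real ProjR G"
  show "realizes (rep_prod rep_cantor rep_baire_seq) (rep_prod rep_bool rep_baire) (prob_prod BWT2 lim_baire)
          (\<lambda>p. Option.bind (Fc Kc p) (\<lambda>r. Option.bind (G r) (Fc Hc)))"
    unfolding realizes_def
  proof (intro allI impI, elim conjE)
    fix p and xx :: "(nat \<Rightarrow> bool) \<times> (nat \<Rightarrow> nat \<Rightarrow> nat)"
    assume dx: "rep_prod rep_cantor rep_baire_seq p = Some xx" and fne: "prob_prod BWT2 lim_baire xx \<noteq> {}"
    obtain x xs where xx: "xx = (x, xs)" by (cases xx)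
    have rc: "rep_cantor (\<lambda>n. p (2 * n)) = Some x" and rb: "rep_baire_seq (\<lambda>n. p (2 * n + 1)) = Some xs"
      using dx unfolding xx rep_prod_Some by auto
    have bits: "\<forall>n. p (2 * n) \<le> 1" and x: "x = (\<lambda>n. p (2 * n) = 1)"
      using rc by (auto simp: rep_cantor_def split: if_splits)
    have xs: "xs = (\<lambda>i j. xsq p i j)" using rb by (auto simp: rep_baire_seq_def xsq_def)
    obtain L where L: "(xs \<longlongrightarrow> L) sequentially"
      using fne unfolding xx prob_prod_def lim_baire_def by auto
    have conv: "\<And>k. eventually (\<lambda>i. xsq p i k = L k) sequentially"
      using conv_of_lim[OF L] unfolding xs .
    define \<alpha> where "\<alpha> = E (tlim 1 p L)"
    define \<beta> where "\<beta> = E (tlim 0 p L)"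
    have a0: "0 < 1 + \<alpha>" "0 < 1 + \<beta>"
      using E_bounds(1)[of "tlim 1 p L"] E_bounds(1)[of "tlim 0 p L"] unfolding \<alpha>_def \<beta>_def by linarith+
    define A where "A = {y. y \<le> -(1 + \<alpha>) \<or> 1 + \<beta> \<le> y}"
    have un: "(\<Union>n. {-(1 + Ef (tst 1 p n) n) <..< 1 + Ef (tst 0 p n) n}) = {-(1 + \<alpha>) <..< 1 + \<beta>}"
      unfolding \<alpha>_def \<beta>_def
      by (rule union_intervals[OF Ef_nonneg Ef_nonneg Ef_tst_le[OF conv] Ef_tst_le[OF conv]
            Ef_tst_approx[OF conv] Ef_tst_approx[OF conv]])
    have Aeq: "- {-(1 + \<alpha>) <..< 1 + \<beta>} = A" unfolding A_def by auto
    have odd: "Kout p (2 * n + 1) = Kval p n" for n by (simp add: Kout_def)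
    have cl: "rep_closed_neg (\<lambda>n. Kout p (2 * n + 1)) = Some A"
      unfolding rep_closed_neg_def odd Kval_interval un Aeq by simp
    have ev: "(\<lambda>n. Kout p (2 * n)) = (\<lambda>n. 0)" by (simp add: Kout_def)
    have dK: "rep_prod delta_real rep_closed_neg (Kout p) = Some (0, A)"
      unfolding rep_prod_Some ev using cl delta_real_zero by simp
    have pne: "ProjR (0, A) \<noteq> {}" unfolding A_def by (rule proj_two(1)[OF a0])
    obtain q y where Gq: "G (Kout p) = Some q" and dq: "delta_real q = Some y" and yP: "y \<in> ProjR (0, A)"
      using RG dK pne unfolding realizes_def by blast
    have ycases: "(y = -(1 + \<alpha>) \<and> 1 + \<alpha> \<le> 1 + \<beta>) \<or> (y = 1 + \<beta> \<and> 1 + \<beta> \<le> 1 + \<alpha>)"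
      using proj_two(2)[OF a0] yP unfolding A_def by blast
    have apx: "\<forall>i. \<bar>nuQ (q i) - y\<bar> \<le> (1/2) ^ i" by (rule delta_real_approx[OF dq])
    have Lt: "tlim b p L (3 * (m div 2) + 2) = L (m div 2)" for b m unfolding tlim_def div3 by simp
    obtain t where t: "y = 1 + E t \<or> y = -(1 + E t)" "\<And>m. t (3 * (m div 2) + 2) = L (m div 2)"
      using ycases Lt unfolding \<alpha>_def \<beta>_def by metis
    have Hq: "Fc Hc q = Some (Hout y t)" by (rule H_Fc[OF apx t(1)])
    have comp: "Option.bind (Fc Kc p) (\<lambda>r. Option.bind (G r) (Fc Hc)) = Some (Hout y t)"
      using K_Fc[of p] Gq Hq by simp
    have h0: "Hout y t 0 \<le> 1" by (simp add: Hout_def)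
    have hodd: "(\<lambda>n. Hout y t (2 * n + 1)) = L"
    proof
      fix n
      have "Hout y t (2 * n + 1) = t (3 * ((2 * n + 1) div 2) + 2)" by (simp add: Hout_def)
      also have "\<dots> = L ((2 * n + 1) div 2)" by (rule t(2))
      finally show "Hout y t (2 * n + 1) = L n" by simp
    qed
    have dY: "rep_prod rep_bool rep_baire (Hout y t) = Some (0 < y, L)"
      unfolding rep_prod_Some hodd using h0 by (simp add: rep_bool_def rep_baire_def Hout_def)
    have bwt: "(0 < y) \<in> BWT2 x"
    proof (cases "0 < y")
      case True
      then have yb: "y = 1 + \<beta>" "\<beta> \<le> \<alpha>" using ycases a0 by auto
      show ?thesis
      proof (rule ccontr)
        assume "(0 < y) \<notin> BWT2 x"
        then have fin1: "finite {n. p (2 * n) = 1}" using True unfolding BWT2_def x by simp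
        have "{n. p (2 * n) = 0} = - {n. p (2 * n) = 1}" using bits by (auto simp: le_Suc_eq)
        then have "infinite {n. p (2 * n) = 0}" using fin1 infinite_UNIV_nat
          by (metis Compl_eq_Diff_UNIV Diff_infinite_finite)
        then have "\<alpha> < \<beta>" unfolding \<alpha>_def \<beta>_def by (rule bwt_lex[OF fin1])
        then show False using yb by simp
      qed
    next
      case False
      then have yb: "y = -(1 + \<alpha>)" "\<alpha> \<le> \<beta>" using ycases a0 by auto
      show ?thesis
      proof (rule ccontr)
        assume "(0 < y) \<notin> BWT2 x"
        then have fin0: "finite {n. p (2 * n) \<noteq> 1}" using False unfolding BWT2_def x by simp
        have eq0: "{n. p (2 * n) \<noteq> 1} = {n. p (2 * n) = 0}" using bits by (auto simp: le_Suc_eq)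
        have "infinite {n. p (2 * n) = 1}" using fin0 infinite_UNIV_nat
          by (metis Compl_eq_Diff_UNIV Diff_infinite_finite Collect_neg_eq)
        then have "\<beta> < \<alpha>" unfolding \<alpha>_def \<beta>_def by (rule bwt_lex[OF fin0[unfolded eq0]])
        then show False using yb by simp
      qed
    qed
    have "(0 < y, L) \<in> prob_prod BWT2 lim_baire xx"
      using bwt L unfolding xx prob_prod_def lim_baire_def by simp
    then show "\<exists>q y. Option.bind (Fc Kc p) (\<lambda>r. Option.bind (G r) (Fc Hc)) = Some q \<and>
               rep_prod rep_bool rep_baire q = Some y \<and> y \<in> prob_prod BWT2 lim_baire xx"
      using comp dY by blast
  qed
qed

end
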